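(* (a) For $n\geq 7$ and every integer $i$ with $3\leq i\leq (n-1)/2$, \[|\eta_{(n-i-1,i,1)}|<-\eta_{(n-3,3)}.\] (b) For $n\geq 6$ and all integers $i,j$ with $2\leq j\leq i\leq (n-2)/2$ and $n-i-j\geq i$ (so that $(n-i-j,i,j)$ is a partition), \[|\eta_{(n-i-j,i,j)}|<-\eta_{(n-3,3)}.\]
   Context: $\mathfrak{S}_n$ is the symmetric group and $D_n\subseteq\mathfrak{S}_n$ the set of derangements. For a partition $\lambda\vdash n$, $\chi_\lambda$ is the irreducible character of $\mathfrak{S}_n$ indexed by $\lambda$, $f_\lambda=\chi_\lambda(1)$, and $\eta_\lambda=\frac{1}{f_\lambda}\sum_{w\in D_n}\chi_\lambda(w)$ (the adjacency eigenvalue of the derangement graph on the $\lambda$-isotypic component). *)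

theory Defs
  imports "HOL-Combinatorics.Combinatorics" "HOL-Library.FuncSet" Complex_Main
begin

text \<open>The irreducible character chi_lambda is given by the Frobenius character formula:
  chi_lambda(w) is the coefficient of x^(lambda+delta) in a_delta * p_mu(x_0..x_(l-1)),
  where l = length lambda, delta_i = l-1-i, mu = cycle type of w,
  a_delta = sum over sigma of sign sigma * prod_i x_i^(delta_(sigma i)).
  Expanding p_mu as a product over cycles of w, each monomial corresponds to a map
  f from [n] to [l] constant on the cycles of w (the cycle goes to variable x_(f x)).\<close>

definition frob_char :: "nat list \<Rightarrow> nat \<Rightarrow> (nat \<Rightarrow> nat) \<Rightarrow> int" where
  "frob_char lam n w =
     (let l = length lam in
      \<Sum>\<sigma>\<in>{\<sigma>. \<sigma> permutes {..<l}}.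
        sign \<sigma> * int (card {f \<in> {..<n} \<rightarrow>\<^sub>E {..<l}.
            (\<forall>x<n. f (w x) = f x) \<and>
            (\<forall>i<l. (l - 1 - \<sigma> i) + card {x \<in> {..<n}. f x = i} = lam ! i + (l - 1 - i))}))"

definition is_partition :: "nat list \<Rightarrow> nat \<Rightarrow> bool" where
  "is_partition lam n \<longleftrightarrow> sum_list lam = n \<and> sorted (rev lam) \<and> (\<forall>p\<in>set lam. p > 0)"

definition derangements :: "nat \<Rightarrow> (nat \<Rightarrow> nat) set" where
  "derangements n = {w. w permutes {..<n} \<and> (\<forall>x<n. w x \<noteq> x)}"

definition eta :: "nat list \<Rightarrow> nat \<Rightarrow> real" where
  "eta lam n = (\<Sum>w\<in>derangements n. real_of_int (frob_char lam n w)) / real_of_int (frob_char lam n id)"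

end

theory Submission
  imports Defs
begin

definition der :: "'a set \<Rightarrow> ('a \<Rightarrow> 'a) set" where
  "der S = {p. p permutes S \<and> (\<forall>x\<in>S. p x \<noteq> x)}"

definition Dn :: "nat \<Rightarrow> nat" where "Dn m = card (der {..<m})"

lemma finite_der: "finite S \<Longrightarrow> finite (der S)"
  unfolding der_def by (rule finite_subset[OF _ finite_permutations]) auto

lemma der_card_le:
  assumes h: "bij_betw h A B" and fA: "finite A"
  shows "card (der A) \<le> card (der B)"
proof -
  have fB: "finite B" using h fA bij_betw_finite by blast
  define \<Phi> where "\<Phi> p = (\<lambda>x. if x \<in> B then h (p (inv_into A h x)) else x)" for p
  have inA: "inv_into A h x \<in> A" "h (inv_into A h x) = x" if "x \<in> B" for x
    using that h by (auto simp: bij_betw_def inv_into_into f_inv_into_f)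
  have hinj: "inj_on h A" using h by (simp add: bij_betw_def)
  have "\<Phi> ` der A \<subseteq> der B"
  proof
    fix q assume "q \<in> \<Phi> ` der A"
    then obtain p where p: "p \<in> der A" "q = \<Phi> p" by blast
    have pp: "p permutes A" and nf: "\<forall>x\<in>A. p x \<noteq> x" using p by (auto simp: der_def)
    have "q permutes B" using permutes_bij_inv_into[OF pp h] p by (simp add: \<Phi>_def)
    moreover have "q x \<noteq> x" if "x \<in> B" for x
    proof
      assume "q x = x"
      hence "h (p (inv_into A h x)) = h (inv_into A h x)" using that inA p by (simp add: \<Phi>_def)
      moreover have "p (inv_into A h x) \<in> A" using permutes_in_image[OF pp] inA[OF that] by simp
      ultimately have "p (inv_into A h x) = inv_into A h x" using hinj inA[OF that]
        by (meson inj_onD)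
      thus False using nf inA[OF that] by blast
    qed
    ultimately show "q \<in> der B" by (simp add: der_def)
  qed
  moreover have "inj_on \<Phi> (der A)"
  proof (rule inj_onI)
    fix p q assume p: "p \<in> der A" and q: "q \<in> der A" and e: "\<Phi> p = \<Phi> q"
    have pp: "p permutes A" "q permutes A" using p q by (auto simp: der_def)
    show "p = q"
    proof
      fix y show "p y = q y"
      proof (cases "y \<in> A")
        case True
        hence hy: "h y \<in> B" using h by (auto simp: bij_betw_def)
        have iv: "inv_into A h (h y) = y" using True hinj by simp
        have "h (p y) = h (q y)" using fun_cong[OF e, of "h y"] hy iv by (simp add: \<Phi>_def)
        moreover have "p y \<in> A" "q y \<in> A" using True permutes_in_image[OF pp(1)] permutes_in_image[OF pp(2)] by auto
        ultimately show ?thesis using hinj by (meson inj_onD)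
      next
        case False thus ?thesis using pp by (simp add: permutes_not_in)
      qed
    qed
  qed
  ultimately show ?thesis using card_inj_on_le finite_der[OF fB] by blast
qed

lemma card_der: "finite A \<Longrightarrow> card (der A) = Dn (card A)"
proof -
  assume fA: "finite A"
  obtain h where h: "bij_betw h {0..<card A} A" using ex_bij_betw_nat_finite[OF fA] by blast
  have h': "bij_betw h {..<card A} A" using h by (simp add: atLeast0LessThan)
  have "card (der {..<card A}) \<le> card (der A)" by (rule der_card_le[OF h']) simp
  moreover have "card (der A) \<le> card (der {..<card A})"
    by (rule der_card_le[OF bij_betw_inv_into[OF h'] fA])
  ultimately show ?thesis unfolding Dn_def by simp
qed

lemma perms_union: "{p. p permutes S} = (\<Union>T\<in>Pow S. der T)"
proof
  show "{p. p permutes S} \<subseteq> (\<Union>T\<in>Pow S. der T)"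
  proof
    fix p assume "p \<in> {p. p permutes S}"
    hence pp: "p permutes S" by simp
    let ?T = "{x. p x \<noteq> x}"
    have "?T \<subseteq> S" using pp permutes_not_in by fastforce
    moreover have "p permutes ?T" using pp unfolding permutes_def by blast
    ultimately show "p \<in> (\<Union>T\<in>Pow S. der T)" by (auto simp: der_def)
  qed
next
  show "(\<Union>T\<in>Pow S. der T) \<subseteq> {p. p permutes S}"
    by (auto simp: der_def intro: permutes_subset)
qed

lemma der_T: "p \<in> der T \<Longrightarrow> T = {x. p x \<noteq> x}"
  unfolding der_def using permutes_not_in by fastforce

lemma fact_sum_der:
  assumes "finite S"
  shows "fact (card S) = (\<Sum>T\<in>Pow S. Dn (card T))"
proof -
  have "fact (card S) = card {p. p permutes S}" using card_permutations[OF refl assms] by simp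
  also have "\<dots> = card (\<Union>T\<in>Pow S. der T)" by (simp add: perms_union)
  also have "\<dots> = (\<Sum>T\<in>Pow S. card (der T))"
    apply (rule card_UN_disjoint)
    using assms apply simp
    using assms apply (meson PowD finite_der finite_subset)
    using der_T by blast
  also have "\<dots> = (\<Sum>T\<in>Pow S. Dn (card T))"
    apply (rule sum.cong[OF refl]) using assms by (meson PowD card_der finite_subset)
  finally show ?thesis .
qed

lemma sum_Pow_card:
  assumes "finite S"
  shows "(\<Sum>T\<in>Pow S. f (card T)) = (\<Sum>k\<le>card S. of_nat (card S choose k) * (f k :: 'b::comm_semiring_1))"
proof -
  have "(\<Sum>T\<in>Pow S. f (card T)) = (\<Sum>k\<le>card S. \<Sum>T\<in>{T. T \<in> Pow S \<and> card T = k}. f (card T))"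
    apply (rule sum.group[symmetric]) using assms by (auto intro: card_mono)
  also have "\<dots> = (\<Sum>k\<le>card S. \<Sum>T\<in>{T. T \<subseteq> S \<and> card T = k}. f k)"
    by (rule sum.cong) auto
  also have "\<dots> = (\<Sum>k\<le>card S. of_nat (card S choose k) * f k)"
    using n_subsets[OF assms] by simp
  finally show ?thesis .
qed

lemma fact_binom_Dn: "fact m = (\<Sum>k\<le>m. of_nat (m choose k) * real (Dn k))"
proof -
  have "fact m = real (fact (card {..<m}))" by simp
  also have "\<dots> = real (\<Sum>T\<in>Pow {..<m}. Dn (card T))" using fact_sum_der[of "{..<m}"] by simp
  also have "\<dots> = (\<Sum>T\<in>Pow {..<m}. real (Dn (card T)))" by simp
  also have "\<dots> = (\<Sum>k\<le>m. of_nat (m choose k) * real (Dn k))"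
    using sum_Pow_card[of "{..<m}" "\<lambda>k. real (Dn k)"] by simp
  finally show ?thesis .
qed

definition ds :: "nat \<Rightarrow> real" where "ds m = (\<Sum>j\<le>m. (-1)^j / fact j)"

lemma ds_Suc: "ds (Suc m) = ds m + (-1)^(Suc m) / fact (Suc m)"
  unfolding ds_def by simp

lemma ds_0[simp]: "ds 0 = 1" unfolding ds_def by simp

lemma alt_fact_sum:
  assumes "m > 0"
  shows "(\<Sum>i\<le>m. (-1)^i / (fact i * fact (m - i))) = (0::real)"
proof -
  have "(\<Sum>i\<le>m. (-1)^i / (fact i * fact (m - i))) = (\<Sum>i\<le>m. (-1)^i * of_nat (m choose i)) / (fact m :: real)"
    unfolding sum_divide_distrib
    by (rule sum.cong[OF refl]) (simp add: binomial_fact field_simps)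
  also have "\<dots> = 0" using choose_alternating_sum[OF assms] by simp
  finally show ?thesis .
qed

lemma Qsum: "(\<Sum>k\<le>m. ds k / fact (m - k)) = 1"
proof (induction m)
  case 0 then show ?case by simp
next
  case (Suc m)
  have "(\<Sum>k\<le>Suc m. ds k / fact (Suc m - k)) = 1 / fact (Suc m) + (\<Sum>k\<le>m. ds (Suc k) / fact (m - k))"
    by (subst sum.atMost_Suc_shift) simp
  also have "\<dots> = 1 / fact (Suc m) + (\<Sum>k\<le>m. ds k / fact (m - k)) + (\<Sum>k\<le>m. (-1)^(Suc k) / (fact (Suc k) * fact (m - k)))"
    by (simp add: ds_Suc add_divide_distrib sum.distrib[symmetric] diff_divide_distrib)
  moreover have "1 / fact (Suc m) + (\<Sum>k\<le>m. (-1)^(Suc k) / (fact (Suc k) * fact (m - k))) = (\<Sum>i\<le>Suc m. (-1)^i / (fact i * fact (Suc m - i)) :: real)"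
    by (simp only: sum.atMost_Suc_shift) simp
  moreover have "(\<Sum>i\<le>Suc m. (-1)^i / (fact i * fact (Suc m - i)) :: real) = 0" by (rule alt_fact_sum) simp
  ultimately show ?case using Suc by simp
qed

lemma Dn_ds: "real (Dn m) = fact m * ds m"
proof (induction m rule: less_induct)
  case (less m)
  have "fact m = (\<Sum>k\<le>m. of_nat (m choose k) * real (Dn k))" by (rule fact_binom_Dn)
  also have "\<dots> = (\<Sum>k<m. of_nat (m choose k) * real (Dn k)) + real (Dn m)"
    by (simp add: lessThan_Suc_atMost[symmetric])
  also have "(\<Sum>k<m. of_nat (m choose k) * real (Dn k)) = (\<Sum>k<m. fact m / fact (m - k) * ds k)"
    apply (rule sum.cong[OF refl])
    using less by (simp add: binomial_fact field_simps)
  finally have 1: "fact m = (\<Sum>k<m. fact m / fact (m - k) * ds k) + real (Dn m)" .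
  have "fact m = fact m * (\<Sum>k\<le>m. ds k / fact (m - k))" using Qsum by simp
  also have "\<dots> = (\<Sum>k<m. fact m / fact (m - k) * ds k) + fact m * ds m"
    by (simp add: lessThan_Suc_atMost[symmetric] sum_distrib_left field_simps)
  finally show ?case using 1 by simp
qed

definition FS :: "'a set \<Rightarrow> nat \<Rightarrow> (nat \<Rightarrow> nat) \<Rightarrow> ('a \<Rightarrow> nat) set" where
  "FS X l g = {f \<in> X \<rightarrow>\<^sub>E {..<l}. \<forall>i<l. card {x\<in>X. f x = i} = g i}"

lemma finite_FS: "finite X \<Longrightarrow> finite (FS X l g)"
proof -
  assume "finite X"
  have "FS X l g \<subseteq> X \<rightarrow>\<^sub>E {..<l}" unfolding FS_def by auto
  moreover have "finite (X \<rightarrow>\<^sub>E {..<l})" using \<open>finite X\<close> by (simp add: finite_PiE)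
  ultimately show ?thesis by (rule finite_subset)
qed

lemma FS_Suc:
  assumes fX: "finite X"
  shows "FS X (Suc l) g = (\<Union>A\<in>{A. A \<subseteq> X \<and> card A = g l}. (\<lambda>h x. if x \<in> A then l else h x) ` FS (X - A) l g)"
    (is "?L = ?R")
proof
  show "?L \<subseteq> ?R"
  proof
    fix f assume f: "f \<in> ?L"
    let ?A = "{x\<in>X. f x = l}"
    let ?h = "restrict f (X - ?A)"
    have fE: "f \<in> X \<rightarrow>\<^sub>E {..<Suc l}" and fc: "\<forall>i<Suc l. card {x\<in>X. f x = i} = g i"
      using f by (auto simp: FS_def)
    have "?h \<in> FS (X - ?A) l g"
    proof -
      have "?h \<in> (X - ?A) \<rightarrow>\<^sub>E {..<l}" using fE by (auto simp: PiE_def Pi_def less_Suc_eq)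
      moreover have "card {x\<in>X - ?A. ?h x = i} = g i" if "i < l" for i
      proof -
        have "{x\<in>X - ?A. ?h x = i} = {x\<in>X. f x = i}" using that by auto
        thus ?thesis using fc that by simp
      qed
      ultimately show ?thesis by (simp add: FS_def)
    qed
    moreover have "f = (\<lambda>x. if x \<in> ?A then l else ?h x)"
    proof
      fix x show "f x = (if x \<in> ?A then l else ?h x)"
        using fE by (cases "x \<in> X") (auto simp: PiE_def extensional_def)
    qed
    moreover have "?A \<subseteq> X \<and> card ?A = g l" using fc by auto
    ultimately show "f \<in> ?R" by blast
  qed
next
  show "?R \<subseteq> ?L"
  proof
    fix f assume "f \<in> ?R"
    then obtain A h where A: "A \<subseteq> X" "card A = g l" and h: "h \<in> FS (X - A) l g"
      and fdef: "f = (\<lambda>x. if x \<in> A then l else h x)" by blast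
    have hE: "h \<in> (X - A) \<rightarrow>\<^sub>E {..<l}" and hc: "\<forall>i<l. card {x\<in>X - A. h x = i} = g i"
      using h by (auto simp: FS_def)
    have "f \<in> X \<rightarrow>\<^sub>E {..<Suc l}"
      using hE A unfolding fdef by (auto simp: PiE_def Pi_def extensional_def)
    moreover have "card {x\<in>X. f x = i} = g i" if "i < Suc l" for i
    proof (cases "i = l")
      case True
      have "{x\<in>X. f x = i} = A" using hE A True unfolding fdef by (auto simp: PiE_def Pi_def)
      thus ?thesis using A True by simp
    next
      case False
      have "{x\<in>X. f x = i} = {x\<in>X - A. h x = i}" using False unfolding fdef by auto
      thus ?thesis using hc that False by simp
    qed
    ultimately show "f \<in> ?L" by (simp add: FS_def)
  qed
qed

lemma card_FS:
  assumes "finite X"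
  shows "card (FS X l g) * (\<Prod>i<l. fact (g i)) = (if (\<Sum>i<l. g i) = card X then fact (card X) else 0)"
  using assms
proof (induction l arbitrary: X)
  case 0
  show ?case
  proof (cases "X = {}")
    case True
    then show ?thesis by (simp add: FS_def)
  next
    case False
    hence "FS X 0 g = {}" by (auto simp: FS_def PiE_eq_empty_iff)
    then show ?thesis using False 0 by simp
  qed
next
  case (Suc l)
  let ?I = "{A. A \<subseteq> X \<and> card A = g l}"
  let ?gl = "\<lambda>A h x. if x \<in> A then l else h x"
  have fI: "finite ?I" using Suc.prems by simp
  have "card (FS X (Suc l) g) = card (\<Union>A\<in>?I. ?gl A ` FS (X - A) l g)"
    using FS_Suc[OF Suc.prems] by simp
  also have "\<dots> = (\<Sum>A\<in>?I. card (?gl A ` FS (X - A) l g))"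
  proof (rule card_UN_disjoint[OF fI])
    show "\<forall>A\<in>?I. finite (?gl A ` FS (X - A) l g)" using Suc.prems finite_FS by blast
    show "\<forall>A\<in>?I. \<forall>B\<in>?I. A \<noteq> B \<longrightarrow> ?gl A ` FS (X - A) l g \<inter> ?gl B ` FS (X - B) l g = {}"
    proof (intro ballI impI)
      fix A B assume A: "A \<in> ?I" and B: "B \<in> ?I" and ne: "A \<noteq> B"
      show "?gl A ` FS (X - A) l g \<inter> ?gl B ` FS (X - B) l g = {}"
      proof (rule ccontr)
        assume "?gl A ` FS (X - A) l g \<inter> ?gl B ` FS (X - B) l g \<noteq> {}"
        then obtain h1 h2 where h1: "h1 \<in> FS (X - A) l g" and h2: "h2 \<in> FS (X - B) l g"
          and e: "?gl A h1 = ?gl B h2" by blast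
        have r1: "\<forall>x\<in>X - A. h1 x < l" using h1 by (auto simp: FS_def PiE_def Pi_def)
        have r2: "\<forall>x\<in>X - B. h2 x < l" using h2 by (auto simp: FS_def PiE_def Pi_def)
        have "A = {x\<in>X. ?gl A h1 x = l}" using A r1 by auto
        also have "\<dots> = {x\<in>X. ?gl B h2 x = l}" using fun_cong[OF e] by simp
        also have "\<dots> = B" using B r2 by auto
        finally show False using ne by simp
      qed
    qed
  qed
  also have "\<dots> = (\<Sum>A\<in>?I. card (FS (X - A) l g))"
  proof (rule sum.cong[OF refl])
    fix A assume A: "A \<in> ?I"
    have "inj_on (?gl A) (FS (X - A) l g)"
    proof (rule inj_onI)
      fix h1 h2 assume h1: "h1 \<in> FS (X - A) l g" and h2: "h2 \<in> FS (X - A) l g" and e: "?gl A h1 = ?gl A h2"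
      show "h1 = h2"
      proof
        fix x show "h1 x = h2 x"
        proof (cases "x \<in> X - A")
          case True thus ?thesis using fun_cong[OF e, of x] by simp
        next
          case False thus ?thesis using h1 h2 by (auto simp: FS_def PiE_def extensional_def)
        qed
      qed
    qed
    thus "card (?gl A ` FS (X - A) l g) = card (FS (X - A) l g)" by (rule card_image)
  qed
  finally have c: "card (FS X (Suc l) g) = (\<Sum>A\<in>?I. card (FS (X - A) l g))" .
  have "card (FS X (Suc l) g) * (\<Prod>i<Suc l. fact (g i))
      = (\<Sum>A\<in>?I. card (FS (X - A) l g) * (\<Prod>i<l. fact (g i))) * fact (g l)"
    unfolding c by (simp add: sum_distrib_right mult.assoc)
  also have "\<dots> = (\<Sum>A\<in>?I. (if (\<Sum>i<l. g i) = card X - g l then fact (card X - g l) else 0)) * fact (g l)"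
  proof -
    have *: "\<And>A. A \<in> ?I \<Longrightarrow> card (FS (X - A) l g) * (\<Prod>i<l. fact (g i)) = (if (\<Sum>i<l. g i) = card X - g l then fact (card X - g l) else 0)"
    proof -
      fix A assume A: "A \<in> ?I"
      have "card (X - A) = card X - g l" using A Suc.prems by (metis (mono_tags, lifting) card_Diff_subset finite_subset mem_Collect_eq)
      thus "card (FS (X - A) l g) * (\<Prod>i<l. fact (g i)) = (if (\<Sum>i<l. g i) = card X - g l then fact (card X - g l) else 0)"
        using Suc.IH[of "X - A"] Suc.prems by simp
    qed
    have "(\<Sum>A\<in>?I. card (FS (X - A) l g) * (\<Prod>i<l. fact (g i))) = (\<Sum>A\<in>?I. (if (\<Sum>i<l. g i) = card X - g l then fact (card X - g l) else 0))"
      by (rule sum.cong[OF refl]) (rule *)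
    thus ?thesis by simp
  qed
  also have "\<dots> = (card X choose g l) * (if (\<Sum>i<l. g i) = card X - g l then fact (card X - g l) else 0) * fact (g l)"
    using n_subsets[OF Suc.prems] by simp
  also have "\<dots> = (if (\<Sum>i<Suc l. g i) = card X then fact (card X) else 0)"
  proof (cases "g l \<le> card X")
    case True
    have "(card X choose g l) * fact (card X - g l) * fact (g l) = (fact (card X) :: nat)"
      using binomial_fact_lemma[OF True] by (simp add: mult.commute mult.left_commute)
    thus ?thesis using True by auto
  next
    case False
    thus ?thesis by simp
  qed
  finally show ?case .
qed

lemma permutes_restrict_invariant:
  assumes w: "w permutes S" and fY: "finite Y" and YS: "Y \<subseteq> S" and inv: "\<And>x. x \<in> Y \<Longrightarrow> w x \<in> Y"
  shows "(\<lambda>x. if x \<in> Y then w x else x) permutes Y"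
proof (rule bij_imp_permutes)
  let ?r = "\<lambda>x. if x \<in> Y then w x else x"
  have inj: "inj_on ?r Y" using permutes_inj[OF w] by (auto simp: inj_on_def inj_def)
  have "?r ` Y \<subseteq> Y" using inv by auto
  hence "?r ` Y = Y" using endo_inj_surj[OF fY _ inj] by blast
  thus "bij_betw ?r Y Y" using inj by (simp add: bij_betw_def)
qed auto

lemma card_fiber_der:
  fixes f :: "nat \<Rightarrow> nat" and l :: nat
  assumes f: "f \<in> {..<n} \<rightarrow>\<^sub>E {..<l}"
  shows "card {w \<in> derangements n. \<forall>x<n. f (w x) = f x} = (\<Prod>i<l. Dn (card {x\<in>{..<n}. f x = i}))"
proof -
  define Y where "Y i = {x\<in>{..<n}. f x = i}" for i
  let ?W = "{w \<in> derangements n. \<forall>x<n. f (w x) = f x}"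
  define \<Phi> where "\<Phi> w = (\<lambda>i\<in>{..<l}. (\<lambda>x. if x \<in> Y i then w x else x))" for w :: "nat \<Rightarrow> nat"
  have fY: "finite (Y i)" for i by (simp add: Y_def)
  have fx: "x < n \<Longrightarrow> f x < l" for x using f by (auto simp: PiE_def Pi_def)
  have "bij_betw \<Phi> ?W (\<Pi>\<^sub>E i\<in>{..<l}. der (Y i))"
  proof (rule bij_betw_imageI)
    show "inj_on \<Phi> ?W"
    proof (rule inj_onI)
      fix w w' assume w: "w \<in> ?W" and w': "w' \<in> ?W" and e: "\<Phi> w = \<Phi> w'"
      have pw: "w permutes {..<n}" "w' permutes {..<n}" using w w' by (auto simp: derangements_def)
      show "w = w'"
      proof
        fix x show "w x = w' x"
        proof (cases "x < n")
          case True
          hence "x \<in> Y (f x)" "f x < l" using fx by (auto simp: Y_def)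
          thus ?thesis using fun_cong[OF fun_cong[OF e, of "f x"], of x] by (simp add: \<Phi>_def)
        next
          case False thus ?thesis using pw by (simp add: permutes_not_in)
        qed
      qed
    qed
    show "\<Phi> ` ?W = (\<Pi>\<^sub>E i\<in>{..<l}. der (Y i))"
    proof
      show "\<Phi> ` ?W \<subseteq> (\<Pi>\<^sub>E i\<in>{..<l}. der (Y i))"
      proof
        fix q assume "q \<in> \<Phi> ` ?W"
        then obtain w where w: "w \<in> ?W" and q: "q = \<Phi> w" by blast
        have pw: "w permutes {..<n}" and nf: "\<forall>x<n. w x \<noteq> x" and pres: "\<forall>x<n. f (w x) = f x"
          using w by (auto simp: derangements_def)
        have "(\<lambda>x. if x \<in> Y i then w x else x) \<in> der (Y i)" for i
        proof -
          have "(\<lambda>x. if x \<in> Y i then w x else x) permutes Y i"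
          proof (rule permutes_restrict_invariant[OF pw fY])
            show "Y i \<subseteq> {..<n}" by (auto simp: Y_def)
            fix x assume "x \<in> Y i"
            thus "w x \<in> Y i" using pres permutes_in_image[OF pw] by (auto simp: Y_def)
          qed
          moreover have "\<forall>x\<in>Y i. w x \<noteq> x" using nf by (auto simp: Y_def)
          ultimately show ?thesis by (simp add: der_def)
        qed
        thus "q \<in> (\<Pi>\<^sub>E i\<in>{..<l}. der (Y i))" unfolding q \<Phi>_def by auto
      qed
    next
      show "(\<Pi>\<^sub>E i\<in>{..<l}. der (Y i)) \<subseteq> \<Phi> ` ?W"
      proof
        fix q assume q: "q \<in> (\<Pi>\<^sub>E i\<in>{..<l}. der (Y i))"
        have qp: "q i permutes Y i" and qn: "\<forall>x\<in>Y i. q i x \<noteq> x" if "i < l" for i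
          using q that by (auto simp: PiE_def Pi_def der_def)
        define w where "w x = (if x < n then q (f x) x else x)" for x
        have xY: "x \<in> Y (f x)" if "x < n" for x using that by (simp add: Y_def)
        have wY: "w x \<in> Y (f x)" if "x < n" for x
          using permutes_in_image[OF qp[OF fx[OF that]]] xY[OF that] that by (simp add: w_def)
        have wn: "w x < n" and wf: "f (w x) = f x" if "x < n" for x using wY[OF that] by (auto simp: Y_def)
        have winj: "inj_on w {..<n}"
        proof (rule inj_onI)
          fix x y assume x: "x \<in> {..<n}" and y: "y \<in> {..<n}" and e: "w x = w y"
          have fxy: "f x = f y" using wf x y e by (metis lessThan_iff)
          have "q (f x) x = q (f x) y" using e x y fxy by (simp add: w_def)
          thus "x = y" using permutes_inj[OF qp[OF fx]] x by (simp add: inj_def)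
        qed
        have "w ` {..<n} = {..<n}" using endo_inj_surj[OF _ _ winj] wn by auto
        hence wp: "w permutes {..<n}" using winj by (intro bij_imp_permutes) (auto simp: bij_betw_def w_def)
        have wnf: "\<forall>x<n. w x \<noteq> x" using qn fx xY by (simp add: w_def)
        have wW: "w \<in> ?W" using wp wnf wf by (simp add: derangements_def)
        have "\<Phi> w = q"
        proof
          fix i show "\<Phi> w i = q i"
          proof (cases "i < l")
            case True
            show ?thesis
            proof
              fix x show "\<Phi> w i x = q i x"
              proof (cases "x \<in> Y i")
                case True
                hence "x < n" "f x = i" by (auto simp: Y_def)
                thus ?thesis using True \<open>i < l\<close> by (simp add: \<Phi>_def w_def)
              next
                case False
                thus ?thesis using permutes_not_in[OF qp[OF \<open>i < l\<close>]] \<open>i < l\<close> by (simp add: \<Phi>_def)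
              qed
            qed
          next
            case False thus ?thesis using q by (simp add: \<Phi>_def PiE_def extensional_def)
          qed
        qed
        thus "q \<in> \<Phi> ` ?W" using wW by blast
      qed
    qed
  qed
  hence "card ?W = card (\<Pi>\<^sub>E i\<in>{..<l}. der (Y i))" by (rule bij_betw_same_card)
  also have "\<dots> = (\<Prod>i<l. card (der (Y i)))" by (rule card_PiE) simp
  also have "\<dots> = (\<Prod>i<l. Dn (card (Y i)))" by (rule prod.cong[OF refl]) (rule card_der[OF fY])
  finally show ?thesis by (simp add: Y_def)
qed

definition cnt :: "nat list \<Rightarrow> (nat \<Rightarrow> nat) \<Rightarrow> nat \<Rightarrow> nat" where
  "cnt lam \<sigma> i = lam ! i + (length lam - 1 - i) - (length lam - 1 - \<sigma> i)"

definition okp :: "nat list \<Rightarrow> (nat \<Rightarrow> nat) \<Rightarrow> bool" where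
  "okp lam \<sigma> = (\<forall>i<length lam. length lam - 1 - \<sigma> i \<le> lam ! i + (length lam - 1 - i))"

definition NN :: "nat list \<Rightarrow> real" where
  "NN lam = (\<Sum>\<sigma>\<in>{\<sigma>. \<sigma> permutes {..<length lam}}. of_int (sign \<sigma>) *
      (if okp lam \<sigma> then (\<Prod>i<length lam. ds (cnt lam \<sigma> i)) else 0))"

definition FF :: "nat list \<Rightarrow> real" where
  "FF lam = (\<Sum>\<sigma>\<in>{\<sigma>. \<sigma> permutes {..<length lam}}. of_int (sign \<sigma>) *
      (if okp lam \<sigma> then (\<Prod>i<length lam. 1 / fact (cnt lam \<sigma> i)) else 0))"

lemma S_eq:
  "{f \<in> {..<n} \<rightarrow>\<^sub>E {..<length lam}. (\<forall>x<n. f (w x) = f x) \<and>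
      (\<forall>i<length lam. (length lam - 1 - \<sigma> i) + card {x \<in> {..<n}. f x = i} = lam ! i + (length lam - 1 - i))}
   = {f \<in> (if okp lam \<sigma> then FS {..<n} (length lam) (cnt lam \<sigma>) else {}). \<forall>x<n. f (w x) = f x}"
proof (cases "okp lam \<sigma>")
  case True
  then show ?thesis unfolding FS_def okp_def cnt_def by auto
next
  case False
  then obtain i where i: "i < length lam" "\<not> (length lam - 1 - \<sigma> i \<le> lam ! i + (length lam - 1 - i))"
    unfolding okp_def by auto
  show ?thesis using False i by auto
qed

lemma sum_cnt:
  assumes s: "\<sigma> permutes {..<length lam}" and ok: "okp lam \<sigma>"
  shows "(\<Sum>i<length lam. cnt lam \<sigma> i) = sum_list lam"
proof -
  let ?l = "length lam"
  have e: "cnt lam \<sigma> i + (?l - 1 - \<sigma> i) = lam ! i + (?l - 1 - i)" if "i < ?l" for i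
    using ok that unfolding okp_def cnt_def by auto
  have "(\<Sum>i<?l. cnt lam \<sigma> i) + (\<Sum>i<?l. ?l - 1 - \<sigma> i) = (\<Sum>i<?l. lam ! i) + (\<Sum>i<?l. ?l - 1 - i)"
    using e by (simp add: sum.distrib[symmetric])
  moreover have "(\<Sum>i<?l. ?l - 1 - \<sigma> i) = (\<Sum>i<?l. ?l - 1 - i)"
    using sum.reindex_bij_betw[OF permutes_imp_bij[OF s], of "\<lambda>j. ?l - 1 - j"] by simp
  moreover have "sum_list lam = (\<Sum>i<?l. lam ! i)" by (simp add: sum_list_sum_nth atLeast0LessThan)
  ultimately show ?thesis by simp
qed

lemma finite_derangements: "finite (derangements n)"
  unfolding derangements_def by (rule finite_subset[OF _ finite_permutations[of "{..<n}"]]) auto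

lemma card_filter_sum: "finite A \<Longrightarrow> card {x\<in>A. P x} = (\<Sum>x\<in>A. if P x then 1 else 0)"
  using sum.inter_filter[of A "\<lambda>_. 1::nat" P] by simp

lemma sum_card_S:
  "(\<Sum>w\<in>derangements n. card {f \<in> F. \<forall>x<n. f (w x) = f x}) =
   (\<Sum>f\<in>F. card {w \<in> derangements n. \<forall>x<n. f (w x) = f x})" if "finite F"
  using that finite_derangements
  by (simp add: card_filter_sum sum.swap[of _ "derangements n" F])

lemma frob_sum:
  assumes p: "sum_list lam = n"
  shows "(\<Sum>w\<in>derangements n. real_of_int (frob_char lam n w)) = fact n * NN lam"
proof -
  let ?l = "length lam"
  let ?P = "{\<sigma>. \<sigma> permutes {..<?l}}"
  have "(\<Sum>w\<in>derangements n. real_of_int (frob_char lam n w)) =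
     (\<Sum>w\<in>derangements n. \<Sum>\<sigma>\<in>?P. of_int (sign \<sigma>) * real (card {f \<in> (if okp lam \<sigma> then FS {..<n} ?l (cnt lam \<sigma>) else {}). \<forall>x<n. f (w x) = f x}))"
    unfolding frob_char_def Let_def S_eq by simp
  also have "\<dots> = (\<Sum>\<sigma>\<in>?P. of_int (sign \<sigma>) * (\<Sum>w\<in>derangements n. real (card {f \<in> (if okp lam \<sigma> then FS {..<n} ?l (cnt lam \<sigma>) else {}). \<forall>x<n. f (w x) = f x})))"
    by (simp add: sum.swap[of _ "derangements n"] sum_distrib_left)
  also have "\<dots> = (\<Sum>\<sigma>\<in>?P. of_int (sign \<sigma>) * (fact n * (if okp lam \<sigma> then (\<Prod>i<?l. ds (cnt lam \<sigma> i)) else 0)))"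
  proof (rule sum.cong[OF refl])
    fix \<sigma> assume "\<sigma> \<in> ?P"
    hence s: "\<sigma> permutes {..<?l}" by simp
    show "of_int (sign \<sigma>) * (\<Sum>w\<in>derangements n. real (card {f \<in> (if okp lam \<sigma> then FS {..<n} ?l (cnt lam \<sigma>) else {}). \<forall>x<n. f (w x) = f x})) = of_int (sign \<sigma>) * (fact n * (if okp lam \<sigma> then (\<Prod>i<?l. ds (cnt lam \<sigma> i)) else 0))"
    proof (cases "okp lam \<sigma>")
      case False thus ?thesis by simp
    next
      case True
      let ?F = "FS {..<n} ?l (cnt lam \<sigma>)"
      have "(\<Sum>w\<in>derangements n. card {f \<in> ?F. \<forall>x<n. f (w x) = f x}) = (\<Sum>f\<in>?F. card {w \<in> derangements n. \<forall>x<n. f (w x) = f x})"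
        by (rule sum_card_S) (simp add: finite_FS)
      also have "\<dots> = (\<Sum>f\<in>?F. \<Prod>i<?l. Dn (cnt lam \<sigma> i))"
      proof (rule sum.cong[OF refl])
        fix f assume f: "f \<in> ?F"
        hence "f \<in> {..<n} \<rightarrow>\<^sub>E {..<?l}" "\<forall>i<?l. card {x \<in> {..<n}. f x = i} = cnt lam \<sigma> i" by (auto simp: FS_def)
        thus "card {w \<in> derangements n. \<forall>x<n. f (w x) = f x} = (\<Prod>i<?l. Dn (cnt lam \<sigma> i))"
          using card_fiber_der by simp
      qed
      also have "\<dots> = card ?F * (\<Prod>i<?l. Dn (cnt lam \<sigma> i))" by simp
      finally have E: "(\<Sum>w\<in>derangements n. card {f \<in> ?F. \<forall>x<n. f (w x) = f x}) = card ?F * (\<Prod>i<?l. Dn (cnt lam \<sigma> i))" .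
      have "real (\<Sum>w\<in>derangements n. card {f \<in> ?F. \<forall>x<n. f (w x) = f x}) = real (card ?F * (\<Prod>i<?l. Dn (cnt lam \<sigma> i)))"
        using E by (rule arg_cong)
      hence 1: "(\<Sum>w\<in>derangements n. real (card {f \<in> ?F. \<forall>x<n. f (w x) = f x})) = real (card ?F) * (\<Prod>i<?l. real (Dn (cnt lam \<sigma> i)))"
        by simp
      have 2: "real (card ?F) * (\<Prod>i<?l. fact (cnt lam \<sigma> i)) = fact n"
      proof -
        have c: "card ?F * (\<Prod>i<?l. fact (cnt lam \<sigma> i)) = (fact n :: nat)"
          using card_FS[of "{..<n}" ?l "cnt lam \<sigma>"] sum_cnt[OF s True] p by simp
        have "real (card ?F * (\<Prod>i<?l. fact (cnt lam \<sigma> i))) = real (fact n)"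
          using c by (rule arg_cong)
        thus ?thesis by simp
      qed
      have 3: "(\<Prod>i<?l. real (Dn (cnt lam \<sigma> i))) = (\<Prod>i<?l. fact (cnt lam \<sigma> i)) * (\<Prod>i<?l. ds (cnt lam \<sigma> i))"
        by (simp add: Dn_ds prod.distrib)
      show ?thesis using True 1 2 3 by (simp add: mult.assoc[symmetric])
    qed
  qed
  also have "\<dots> = fact n * NN lam" unfolding NN_def by (simp add: sum_distrib_left mult.left_commute)
  finally show ?thesis .
qed

lemma frob_id:
  assumes p: "sum_list lam = n"
  shows "real_of_int (frob_char lam n id) = fact n * FF lam"
proof -
  let ?l = "length lam"
  let ?P = "{\<sigma>. \<sigma> permutes {..<?l}}"
  have "real_of_int (frob_char lam n id) =
     (\<Sum>\<sigma>\<in>?P. of_int (sign \<sigma>) * real (card {f \<in> (if okp lam \<sigma> then FS {..<n} ?l (cnt lam \<sigma>) else {}). \<forall>x<n. f (id x) = f x}))"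
    unfolding frob_char_def Let_def S_eq by simp
  also have "\<dots> = (\<Sum>\<sigma>\<in>?P. of_int (sign \<sigma>) * (fact n * (if okp lam \<sigma> then (\<Prod>i<?l. 1 / fact (cnt lam \<sigma> i)) else 0)))"
  proof (rule sum.cong[OF refl])
    fix \<sigma> assume "\<sigma> \<in> ?P"
    hence s: "\<sigma> permutes {..<?l}" by simp
    show "of_int (sign \<sigma>) * real (card {f \<in> (if okp lam \<sigma> then FS {..<n} ?l (cnt lam \<sigma>) else {}). \<forall>x<n. f (id x) = f x}) = of_int (sign \<sigma>) * (fact n * (if okp lam \<sigma> then (\<Prod>i<?l. 1 / fact (cnt lam \<sigma> i)) else 0))"
    proof (cases "okp lam \<sigma>")
      case False thus ?thesis by simp
    next
      case True
      let ?F = "FS {..<n} ?l (cnt lam \<sigma>)"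
      have 2: "real (card ?F) * (\<Prod>i<?l. fact (cnt lam \<sigma> i)) = fact n"
      proof -
        have c: "card ?F * (\<Prod>i<?l. fact (cnt lam \<sigma> i)) = (fact n :: nat)"
          using card_FS[of "{..<n}" ?l "cnt lam \<sigma>"] sum_cnt[OF s True] p by simp
        have "real (card ?F * (\<Prod>i<?l. fact (cnt lam \<sigma> i))) = real (fact n)"
          using c by (rule arg_cong)
        thus ?thesis by simp
      qed
      have "(\<Prod>i<?l. fact (cnt lam \<sigma> i) :: real) \<noteq> 0" by simp
      hence "real (card ?F) = fact n * (\<Prod>i<?l. 1 / fact (cnt lam \<sigma> i))"
        using 2 by (simp add: prod_dividef field_simps)
      thus ?thesis using True by simp
    qed
  qed
  also have "\<dots> = fact n * FF lam" unfolding FF_def by (simp add: sum_distrib_left mult.left_commute)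
  finally show ?thesis .
qed

lemma eta_NN_FF: assumes "sum_list lam = n" shows "eta lam n = NN lam / FF lam"
  unfolding eta_def frob_sum[OF assms] frob_id[OF assms] by simp

lemma perm3_sum:
  fixes F :: "nat \<Rightarrow> nat \<Rightarrow> nat \<Rightarrow> real"
  shows "(\<Sum>\<sigma>\<in>{\<sigma>. \<sigma> permutes {..<3::nat}}. of_int (sign \<sigma>) * F (\<sigma> 0) (\<sigma> 1) (\<sigma> 2))
     = F 0 1 2 - F 0 2 1 - F 1 0 2 + F 1 2 0 + F 2 0 1 - F 2 1 0"
proof -
  have e: "{..<3::nat} = insert 0 (insert 1 (insert 2 {}))" by auto
  show ?thesis
    unfolding e
    by (simp add: sum_over_permutations_insert sign_compose permutation_swap_id
        permutation_compose sign_swap_id transpose_def)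
qed

lemma perm2_sum:
  fixes F :: "nat \<Rightarrow> nat \<Rightarrow> real"
  shows "(\<Sum>\<sigma>\<in>{\<sigma>. \<sigma> permutes {..<2::nat}}. of_int (sign \<sigma>) * F (\<sigma> 0) (\<sigma> 1))
     = F 0 1 - F 1 0"
proof -
  have e: "{..<2::nat} = insert 0 (insert 1 {})" by auto
  show ?thesis
    unfolding e
    by (simp add: sum_over_permutations_insert sign_compose permutation_swap_id
        permutation_compose sign_swap_id transpose_def)
qed

lemma ds_1[simp]: "ds (Suc 0) = 0" by (simp add: ds_def)

lemma okp3: "okp [a, b, c] x = (2 - x 0 \<le> a + 2 \<and> 2 - x 1 \<le> b + 1 \<and> 2 - x 2 \<le> c)"
  by (auto simp add: okp_def All_less_Suc eval_nat_numeral)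

lemma prod3: "(\<Prod>i<3. (h :: nat \<Rightarrow> real) (cnt [a, b, c] x i)) = h (a + 2 - (2 - x 0)) * h (b + 1 - (2 - x 1)) * h (c - (2 - x 2))"
  by (simp add: cnt_def eval_nat_numeral mult.assoc)

lemma okp2: "okp [a, b] x = (1 - x 0 \<le> a + 1 \<and> 1 - x 1 \<le> b)"
  by (auto simp add: okp_def All_less_Suc eval_nat_numeral)

lemma prod2: "(\<Prod>i<2. (h :: nat \<Rightarrow> real) (cnt [a, b] x i)) = h (a + 1 - (1 - x 0)) * h (b - (1 - x 1))"
  by (simp add: cnt_def eval_nat_numeral mult.assoc)

lemma len3: "length [a, b, c] = 3" by simp
lemma len2: "length [a, b] = 2" by simp

definition G3 :: "(nat \<Rightarrow> real) \<Rightarrow> nat \<Rightarrow> nat \<Rightarrow> nat \<Rightarrow> nat \<Rightarrow> nat \<Rightarrow> nat \<Rightarrow> real" where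
  "G3 h a b c x y z = (if 2 - x \<le> a + 2 \<and> 2 - y \<le> b + 1 \<and> 2 - z \<le> c
        then h (a + 2 - (2 - x)) * h (b + 1 - (2 - y)) * h (c - (2 - z)) else 0)"

definition G2 :: "(nat \<Rightarrow> real) \<Rightarrow> nat \<Rightarrow> nat \<Rightarrow> nat \<Rightarrow> nat \<Rightarrow> real" where
  "G2 h a b x y = (if 1 - x \<le> a + 1 \<and> 1 - y \<le> b
        then h (a + 1 - (1 - x)) * h (b - (1 - y)) else 0)"

lemma NN3_gen:
  "NN [a, b, c] = (\<Sum>\<sigma>\<in>{\<sigma>. \<sigma> permutes {..<3::nat}}. of_int (sign \<sigma>) * G3 ds a b c (\<sigma> 0) (\<sigma> 1) (\<sigma> 2))"
  unfolding NN_def G3_def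
  by (simp only: len3 len2 okp3 okp2 prod3[where h=ds] prod2[where h=ds] prod3[where h="\<lambda>m. 1 / fact m"] prod2[where h="\<lambda>m. 1 / fact m"])

lemma FF3_gen:
  "FF [a, b, c] = (\<Sum>\<sigma>\<in>{\<sigma>. \<sigma> permutes {..<3::nat}}. of_int (sign \<sigma>) * G3 (\<lambda>m. 1 / fact m) a b c (\<sigma> 0) (\<sigma> 1) (\<sigma> 2))"
  unfolding FF_def G3_def
  by (simp only: len3 len2 okp3 okp2 prod3[where h="\<lambda>m. 1 / fact m"])

lemma NN2_gen:
  "NN [a, b] = (\<Sum>\<sigma>\<in>{\<sigma>. \<sigma> permutes {..<2::nat}}. of_int (sign \<sigma>) * G2 ds a b (\<sigma> 0) (\<sigma> 1))"
  unfolding NN_def G2_def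
  by (simp only: len3 len2 okp3 okp2 prod2[where h=ds])

lemma FF2_gen:
  "FF [a, b] = (\<Sum>\<sigma>\<in>{\<sigma>. \<sigma> permutes {..<2::nat}}. of_int (sign \<sigma>) * G2 (\<lambda>m. 1 / fact m) a b (\<sigma> 0) (\<sigma> 1))"
  unfolding FF_def G2_def
  by (simp only: len3 len2 okp3 okp2 prod2[where h="\<lambda>m. 1 / fact m"])

lemma NN3b: "NN [a, Suc b, Suc (Suc c)] =
   ds a * ds (b+1) * ds (c+2) - ds a * ds (b+2) * ds (c+1) - ds (a+1) * ds b * ds (c+2)
   + ds (a+1) * ds (b+2) * ds c + ds (a+2) * ds b * ds (c+1) - ds (a+2) * ds (b+1) * ds c"
  unfolding NN3_gen perm3_sum by (simp add: G3_def)

lemma FF3b: "FF [a, Suc b, Suc (Suc c)] =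
   1/fact a * (1/fact (b+1)) * (1/fact (c+2)) - 1/fact a * (1/fact (b+2)) * (1/fact (c+1)) - 1/fact (a+1) * (1/fact b) * (1/fact (c+2))
   + 1/fact (a+1) * (1/fact (b+2)) * (1/fact c) + 1/fact (a+2) * (1/fact b) * (1/fact (c+1)) - 1/fact (a+2) * (1/fact (b+1)) * (1/fact c)"
  unfolding FF3_gen perm3_sum by (simp add: G3_def)

lemma NN3a: "NN [a, Suc b, 1] = ds (a+2) * ds b - ds a * ds (b+2)"
  unfolding NN3_gen perm3_sum by (simp add: G3_def)

lemma FF3a: "FF [a, Suc b, 1] = 1/fact a * (1/fact (b+1)) - 1/fact a * (1/fact (b+2)) - 1/fact (a+1) * (1/fact b) + 1/fact (a+2) * (1/fact b)"
  unfolding FF3_gen perm3_sum by (simp add: G3_def)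

lemma NN2: "NN [a, Suc b] = ds a * ds (Suc b) - ds (a+1) * ds b"
  unfolding NN2_gen perm2_sum by (simp add: G2_def)

lemma FF2: "FF [a, Suc b] = 1/fact a * (1/fact (Suc b)) - 1/fact (a+1) * (1/fact b)"
  unfolding FF2_gen perm2_sum by (simp add: G2_def)

definition t :: "nat \<Rightarrow> real" where "t k = (-1)^k / fact k"

lemma ds_Suc_t: "ds (Suc m) = ds m + t (Suc m)"
  unfolding t_def by (rule ds_Suc)

lemma t_Suc: "t (Suc k) = - t k / (real k + 1)"
  unfolding t_def by (simp add: field_simps)

lemma abs_t: "\<bar>t k\<bar> = 1 / fact k"
  unfolding t_def by (simp add: abs_divide)

lemma Mabs: "\<bar>t p * t (Suc q) - t (Suc p) * t q\<bar> = \<bar>real p - real q\<bar> / (fact (Suc p) * fact (Suc q))"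
proof -
  have tq: "t q = - (real q + 1) * t (Suc q)" using t_Suc[of q] by (simp add: field_simps)
  have "t p * t (Suc q) - t (Suc p) * t q = t p * t (Suc q) * (real p - real q) / (real p + 1)"
    unfolding tq t_Suc[of p] by (simp add: field_simps)
  hence "\<bar>t p * t (Suc q) - t (Suc p) * t q\<bar> = \<bar>t p\<bar> * \<bar>t (Suc q)\<bar> * \<bar>real p - real q\<bar> / (real p + 1)"
    by (simp add: abs_mult abs_divide)
  also have "\<dots> = \<bar>real p - real q\<bar> / (fact (Suc p) * fact (Suc q))"
    unfolding abs_t by (simp add: field_simps)
  finally show ?thesis .
qed

lemma tt_abs: "\<bar>t k + t (Suc k)\<bar> = real k / fact (Suc k)"
proof -
  have "t k + t (Suc k) = t k * real k / (real k + 1)"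
    unfolding t_Suc by (simp add: field_simps)
  hence "\<bar>t k + t (Suc k)\<bar> = \<bar>t k\<bar> * real k / (real k + 1)" by (simp add: abs_mult abs_divide)
  thus ?thesis unfolding abs_t by (simp add: field_simps)
qed

lemma div_le_self: "0 \<le> (x::real) \<Longrightarrow> 1 \<le> y \<Longrightarrow> x / y \<le> x"
  using mult_left_mono[of 1 y x] by (simp add: divide_le_eq)

lemma ds_bounds_aux:
  assumes "2 \<le> m"
  shows "1/3 \<le> ds m + min 0 (t (Suc m)) \<and> ds m + max 0 (t (Suc m)) \<le> 1/2"
  using assms
proof (induction m rule: nat_induct_at_least)
  case base
  have "ds 2 = 1/2" by (simp add: ds_def eval_nat_numeral)
  moreover have "t 3 = - 1/6" by (simp add: t_def eval_nat_numeral)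
  ultimately show ?case by (simp add: eval_nat_numeral)
next
  case (Suc m)
  let ?u = "t (Suc m)"
  have e: "t (Suc (Suc m)) = - ?u / (real (Suc m) + 1)" by (rule t_Suc)
  have d: "ds (Suc m) = ds m + ?u" by (rule ds_Suc_t)
  show ?case
  proof (cases "?u \<ge> 0")
    case True
    have "?u / (real (Suc m) + 1) \<le> ?u" using True by (intro div_le_self) auto
    moreover have "?u / (real (Suc m) + 1) \<ge> 0" using True by simp
    ultimately show ?thesis using Suc.IH True unfolding d e by auto
  next
    case False
    have "(- ?u) / (real (Suc m) + 1) \<le> - ?u" using False by (intro div_le_self) auto
    hence "?u / (real (Suc m) + 1) \<ge> ?u" by simp
    moreover have "?u / (real (Suc m) + 1) \<le> 0" using False by (simp add: divide_nonpos_pos)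
    ultimately show ?thesis using Suc.IH False unfolding d e by auto
  qed
qed

lemma ds_lower: "2 \<le> m \<Longrightarrow> 1/3 \<le> ds m"
  using ds_bounds_aux[of m] by auto

lemma ds_upper: "2 \<le> m \<Longrightarrow> ds m \<le> 1/2"
  using ds_bounds_aux[of m] by auto

lemma ds_nonneg: "0 \<le> ds m"
proof -
  consider "m = 0" | "m = 1" | "2 \<le> m" by linarith
  thus ?thesis
  proof cases
    case 3 thus ?thesis using ds_lower[of m] by simp
  qed simp_all
qed

lemma ds_le1: "ds m \<le> 1"
proof -
  consider "m = 0" | "m = 1" | "2 \<le> m" by linarith
  thus ?thesis
  proof cases
    case 3 thus ?thesis using ds_upper[of m] by simp
  qed simp_all
qed

lemma NN3b_col: "NN [a, Suc b, Suc (Suc c)] =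
   ds a * (t (b+1) * t (c+2) - t (b+2) * t (c+1)) - ds b * (t (a+1) * t (c+2) - t (a+2) * t (c+1))
   + ds c * (t (a+1) * t (b+2) - t (a+2) * t (b+1))"
proof -
  have e: "ds (x+1) = ds x + t (x+1)" "ds (x+2) = ds x + t (x+1) + t (x+2)" for x
    using ds_Suc_t[of x] ds_Suc_t[of "Suc x"] by simp_all
  show ?thesis unfolding NN3b e by algebra
qed

lemma NN3a_col: "NN [a, Suc b, 1] = ds b * (t (a+1) + t (a+2)) - ds a * (t (b+1) + t (b+2))"
proof -
  have e: "ds (x+2) = ds x + t (x+1) + t (x+2)" for x
    using ds_Suc_t[of x] ds_Suc_t[of "Suc x"] by simp_all
  show ?thesis unfolding NN3a e by algebra
qed

lemma fact_plus2: "(fact (x+2) :: real) = (real x + 2) * ((real x + 1) * fact x)"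
proof -
  have "(fact (x+2) :: real) = fact (Suc (Suc x))" by (simp add: eval_nat_numeral)
  also have "\<dots> = (real x + 2) * ((real x + 1) * fact x)" by (simp add: fact_Suc algebra_simps)
  finally show ?thesis .
qed

lemma inv_fact0: "1 / (fact x :: real) = (real x + 2) * (real x + 1) * (1 / fact (x+2))"
proof -
  have p: "real x + 2 > 0" "real x + 1 > 0" "(fact x :: real) > 0" by auto
  show ?thesis unfolding fact_plus2 using p by auto
qed

lemma inv_fact1: "1 / (fact (x+1) :: real) = (real x + 2) * (1 / fact (x+2))"
proof -
  have p: "real x + 2 > 0" "real x + 1 > 0" "(fact x :: real) > 0" by auto
  have f1: "(fact (x+1) :: real) = (real x + 1) * fact x" by simp
  show ?thesis unfolding fact_plus2 f1 using p by auto
qed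

lemma FF3b_closed: "FF [a, Suc b, Suc (Suc c)] =
   (real a - real b) * (real a - real c) * (real b - real c) * (1 / fact (a+2)) * (1 / fact (b+2)) * (1 / fact (c+2))"
  unfolding FF3b inv_fact0[of a] inv_fact0[of b] inv_fact0[of c] inv_fact1[of a] inv_fact1[of b] inv_fact1[of c]
  by algebra

lemma FF3a_closed: "FF [a, Suc b, 1] =
   (real a - real b) * (real a + 1) * (real b + 1) * (1 / fact (a+2)) * (1 / fact (b+2))"
  unfolding FF3a inv_fact0[of a] inv_fact0[of b] inv_fact1[of a] inv_fact1[of b]
  by algebra

lemma inv_fact_S: "1 / (fact x :: real) = (real x + 1) * (1 / fact (x+1))"
proof -
  have p: "real x + 1 > 0" "(fact x :: real) > 0" by auto
  have f1: "(fact (x+1) :: real) = (real x + 1) * fact x" by simp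
  show ?thesis unfolding f1 using p by auto
qed

lemma FF2_closed: "FF [m, 3] = (real m - 2) * (1 / fact (m+1)) / 6"
proof -
  have "FF [m, 3] = FF [m, Suc 2]" by simp
  also have "\<dots> = 1/fact m * (1/fact 3) - 1/fact (m+1) * (1/fact 2)" unfolding FF2 by simp
  also have "\<dots> = (real m + 1) * (1/fact (m+1)) / 6 - (1/fact (m+1)) / 2"
    unfolding inv_fact_S[of m] by (simp add: eval_nat_numeral)
  also have "\<dots> = (real m - 2) * (1 / fact (m+1)) / 6"
  proof -
    have h: "\<And>G::real. (real m + 1) * G / 6 - G / 2 = (real m - 2) * G / 6" by (simp add: field_simps)
    show ?thesis by (rule h)
  qed
  finally show ?thesis .
qed

lemma NN2_val: "NN [m, 3] = ds m / 3 - ds (m+1) / 2"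
proof -
  have "NN [m, 3] = NN [m, Suc 2]" by simp
  also have "\<dots> = ds m * ds 3 - ds (m+1) * ds 2" unfolding NN2 by simp
  finally have 1: "NN [m, 3] = ds m * ds 3 - ds (m+1) * ds 2" .
  have d3: "ds 3 = 1/3" and d2: "ds 2 = 1/2" by (simp_all add: ds_def eval_nat_numeral)
  show ?thesis unfolding 1 d3 d2 by simp
qed

lemma Mabs2: "\<bar>t (p+1) * t (q+2) - t (p+2) * t (q+1)\<bar> = \<bar>real p - real q\<bar> * (1 / fact (p+2)) * (1 / fact (q+2))"
proof -
  have e: "Suc (p+1) = p+2" "Suc (q+1) = q+2" by simp_all
  have "\<bar>t (p+1) * t (q+2) - t (p+2) * t (q+1)\<bar> = \<bar>real (p+1) - real (q+1)\<bar> / (fact (p+2) * fact (q+2))"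
    using Mabs[of "p+1" "q+1"] unfolding e .
  also have "\<dots> = \<bar>real p - real q\<bar> * (1 / fact (p+2)) * (1 / fact (q+2))"
    by (simp only: of_nat_add) (simp add: divide_inverse)
  finally show ?thesis .
qed

lemma tt_abs2: "\<bar>t (k+1) + t (k+2)\<bar> = (real k + 1) * (1 / fact (k+2))"
proof -
  have e: "Suc (k+1) = k+2" by simp
  have "\<bar>t (k+1) + t (k+2)\<bar> = real (k+1) / fact (k+2)"
    using tt_abs[of "k+1"] unfolding e .
  also have "\<dots> = (real k + 1) * (1 / fact (k+2))"
    by (simp only: of_nat_add of_nat_1) (simp add: divide_inverse)
  finally show ?thesis .
qed

lemma aux_T: "G > 0 \<Longrightarrow> m2 > 0 \<Longrightarrow> - ((d0 / 3 - d1 / 2) / (m2 * G / 6)) = (3 * d1 - 2 * d0) / (m2 * (G::real))"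
  by (simp add: field_simps)

lemma aux_b: "x > 0 \<Longrightarrow> y > 0 \<Longrightarrow> z > 0 \<Longrightarrow> Fa > 0 \<Longrightarrow> Fb > 0 \<Longrightarrow> Fc > 0 \<Longrightarrow>
  (A * (z * Fb * Fc) + B * (y * Fa * Fc) + C * (x * Fa * Fb)) / (x * y * z * Fa * Fb * Fc)
   = A / (x * y * Fa) + B / (x * z * Fb) + C / (y * z * (Fc::real))"
  by (simp add: field_simps)

lemma aux_a: "x > 0 \<Longrightarrow> y > 0 \<Longrightarrow> z > 0 \<Longrightarrow> Fa > 0 \<Longrightarrow> Fb > 0 \<Longrightarrow>
  (B * (y * Fa) + A * (z * Fb)) / (x * y * z * Fa * Fb)
   = A / (x * y * Fa) + B / (x * z * (Fb::real))"
  by (simp add: field_simps)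

lemma T_exact:
  assumes m: "3 \<le> m"
  shows "- eta [m, 3] (m+3) = (3 * ds (m+1) - 2 * ds m) * fact (m+1) / (real m - 2)"
proof -
  let ?G = "1 / fact (m+1) :: real"
  have G: "?G > 0" by simp
  have m2: "real m - 2 > 0" using m by simp
  have e: "eta [m, 3] (m+3) = (ds m / 3 - ds (m+1) / 2) / ((real m - 2) * ?G / 6)"
    using eta_NN_FF[of "[m,3]" "m+3"] by (simp add: NN2_val FF2_closed)
  have "- eta [m, 3] (m+3) = (3 * ds (m+1) - 2 * ds m) / ((real m - 2) * ?G)"
    unfolding e by (rule aux_T[OF G m2])
  also have "\<dots> = (3 * ds (m+1) - 2 * ds m) * fact (m+1) / (real m - 2)"
    by simp
  finally show ?thesis .
qed

lemma T_low:
  assumes m: "3 \<le> m"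
  shows "((fact (m+1)) * ds m - 3) / (real m - 2) \<le> - eta [m, 3] (m+3)"
proof -
  let ?G = "1 / fact (m+1) :: real"
  have G: "?G > 0" by simp
  have m2: "real m - 2 > 0" using m by simp
  have e: "eta [m, 3] (m+3) = (ds m / 3 - ds (m+1) / 2) / ((real m - 2) * ?G / 6)"
    using eta_NN_FF[of "[m,3]" "m+3"] by (simp add: NN2_val FF2_closed)
  have "- eta [m, 3] (m+3) = (3 * ds (m+1) - 2 * ds m) / ((real m - 2) * ?G)"
    unfolding e by (rule aux_T[OF G m2])
  also have "\<dots> = (3 * ds (m+1) - 2 * ds m) * fact (m+1) / (real m - 2)"
    by simp
  finally have 1: "- eta [m, 3] (m+3) = (3 * ds (m+1) - 2 * ds m) * fact (m+1) / (real m - 2)" .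
  have "\<bar>t (m+1)\<bar> = ?G" using abs_t by simp
  hence "t (m+1) \<ge> - ?G" by linarith
  hence "3 * ds (m+1) - 2 * ds m \<ge> ds m - 3 * ?G" using ds_Suc_t[of m] by simp
  hence "(3 * ds (m+1) - 2 * ds m) * fact (m+1) \<ge> (ds m - 3 * ?G) * fact (m+1)"
    by (rule mult_right_mono) simp
  also have "(ds m - 3 * ?G) * fact (m+1) = fact (m+1) * ds m - 3"
  proof -
    have h: "\<And>F d::real. F > 0 \<Longrightarrow> (d - 3 * (1 / F)) * F = F * d - 3" by (simp add: field_simps)
    show ?thesis by (rule h) simp
  qed
  finally have "fact (m+1) * ds m - 3 \<le> (3 * ds (m+1) - 2 * ds m) * fact (m+1)" .
  hence "(fact (m+1) * ds m - 3) / (real m - 2) \<le> (3 * ds (m+1) - 2 * ds m) * fact (m+1) / (real m - 2)"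
    using m2 by (simp add: divide_right_mono)
  thus ?thesis using 1 by simp
qed

lemma U_b:
  assumes ab: "b + 1 \<le> a" and bc: "c + 1 \<le> b"
  shows "\<bar>eta [a, Suc b, Suc (Suc c)] (a+b+c+3)\<bar> \<le>
     ds a * fact (a+2) / ((real a - real b) * (real a - real c))
   + ds b * fact (b+2) / ((real a - real b) * (real b - real c))
   + ds c * fact (c+2) / ((real a - real c) * (real b - real c))"
proof -
  let ?Fa = "1 / fact (a+2) :: real" and ?Fb = "1 / fact (b+2) :: real" and ?Fc = "1 / fact (c+2) :: real"
  define x where "x = real a - real b"
  define y where "y = real a - real c"
  define z where "z = real b - real c"
  have xyz: "x > 0" "y > 0" "z > 0" using ab bc by (auto simp: x_def y_def z_def)
  have F: "?Fa > 0" "?Fb > 0" "?Fc > 0" by auto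
  have FF: "FF [a, Suc b, Suc (Suc c)] = x * y * z * ?Fa * ?Fb * ?Fc"
    unfolding FF3b_closed x_def y_def z_def by simp
  have FFpos: "FF [a, Suc b, Suc (Suc c)] > 0" unfolding FF using xyz F by simp
  have M1: "\<bar>t (b+1) * t (c+2) - t (b+2) * t (c+1)\<bar> = z * ?Fb * ?Fc"
    using Mabs2[of b c] xyz by (simp add: z_def)
  have M2: "\<bar>t (a+1) * t (c+2) - t (a+2) * t (c+1)\<bar> = y * ?Fa * ?Fc"
    using Mabs2[of a c] xyz by (simp add: y_def)
  have M3: "\<bar>t (a+1) * t (b+2) - t (a+2) * t (b+1)\<bar> = x * ?Fa * ?Fb"
    using Mabs2[of a b] xyz by (simp add: x_def)
  have "\<bar>NN [a, Suc b, Suc (Suc c)]\<bar> \<le> ds a * (z * ?Fb * ?Fc) + ds b * (y * ?Fa * ?Fc) + ds c * (x * ?Fa * ?Fb)"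
  proof -
    have "\<bar>NN [a, Suc b, Suc (Suc c)]\<bar> \<le> \<bar>ds a * (t (b+1) * t (c+2) - t (b+2) * t (c+1))\<bar>
       + \<bar>ds b * (t (a+1) * t (c+2) - t (a+2) * t (c+1))\<bar> + \<bar>ds c * (t (a+1) * t (b+2) - t (a+2) * t (b+1))\<bar>"
      unfolding NN3b_col by linarith
    also have "\<dots> = ds a * (z * ?Fb * ?Fc) + ds b * (y * ?Fa * ?Fc) + ds c * (x * ?Fa * ?Fb)"
      unfolding abs_mult M1 M2 M3 using ds_nonneg by simp
    finally show ?thesis .
  qed
  hence "\<bar>NN [a, Suc b, Suc (Suc c)]\<bar> / FF [a, Suc b, Suc (Suc c)] \<le>
     (ds a * (z * ?Fb * ?Fc) + ds b * (y * ?Fa * ?Fc) + ds c * (x * ?Fa * ?Fb)) / FF [a, Suc b, Suc (Suc c)]"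
    using FFpos by (simp add: divide_right_mono)
  also have "\<dots> = ds a / (x * y * ?Fa) + ds b / (x * z * ?Fb) + ds c / (y * z * ?Fc)"
    unfolding FF by (rule aux_b[OF xyz F])
  also have "\<dots> = ds a * fact (a+2) / (x * y) + ds b * fact (b+2) / (x * z) + ds c * fact (c+2) / (y * z)"
    by simp
  finally have "\<bar>NN [a, Suc b, Suc (Suc c)]\<bar> / FF [a, Suc b, Suc (Suc c)] \<le>
     ds a * fact (a+2) / (x * y) + ds b * fact (b+2) / (x * z) + ds c * fact (c+2) / (y * z)" .
  moreover have "eta [a, Suc b, Suc (Suc c)] (a+b+c+3) = NN [a, Suc b, Suc (Suc c)] / FF [a, Suc b, Suc (Suc c)]"
    by (rule eta_NN_FF) simp
  ultimately show ?thesis using FFpos unfolding x_def y_def z_def by (simp add: abs_divide)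
qed

lemma U_a:
  assumes ab: "b + 1 \<le> a"
  shows "\<bar>eta [a, Suc b, 1] (a+b+2)\<bar> \<le>
     ds a * fact (a+2) / ((real a - real b) * (real a + 1))
   + ds b * fact (b+2) / ((real a - real b) * (real b + 1))"
proof -
  let ?Fa = "1 / fact (a+2) :: real" and ?Fb = "1 / fact (b+2) :: real"
  define x where "x = real a - real b"
  define y where "y = real a + 1"
  define z where "z = real b + 1"
  have xyz: "x > 0" "y > 0" "z > 0" using ab by (auto simp: x_def y_def z_def)
  have F: "?Fa > 0" "?Fb > 0" by auto
  have FF: "FF [a, Suc b, 1] = x * y * z * ?Fa * ?Fb"
    unfolding FF3a_closed x_def y_def z_def by simp
  have FFpos: "FF [a, Suc b, 1] > 0" unfolding FF using xyz F by simp
  have "\<bar>NN [a, Suc b, 1]\<bar> \<le> ds b * (y * ?Fa) + ds a * (z * ?Fb)"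
  proof -
    have "\<bar>NN [a, Suc b, 1]\<bar> \<le> \<bar>ds b * (t (a+1) + t (a+2))\<bar> + \<bar>ds a * (t (b+1) + t (b+2))\<bar>"
      unfolding NN3a_col by linarith
    also have "\<dots> = ds b * (y * ?Fa) + ds a * (z * ?Fb)"
      unfolding abs_mult tt_abs2 y_def z_def using ds_nonneg by simp
    finally show ?thesis .
  qed
  hence "\<bar>NN [a, Suc b, 1]\<bar> / FF [a, Suc b, 1] \<le> (ds b * (y * ?Fa) + ds a * (z * ?Fb)) / FF [a, Suc b, 1]"
    using FFpos by (simp add: divide_right_mono)
  also have "\<dots> = ds a / (x * y * ?Fa) + ds b / (x * z * ?Fb)"
    unfolding FF by (rule aux_a[OF xyz F])
  also have "\<dots> = ds a * fact (a+2) / (x * y) + ds b * fact (b+2) / (x * z)"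
    by simp
  finally have "\<bar>NN [a, Suc b, 1]\<bar> / FF [a, Suc b, 1] \<le> ds a * fact (a+2) / (x * y) + ds b * fact (b+2) / (x * z)" .
  moreover have "eta [a, Suc b, 1] (a+b+2) = NN [a, Suc b, 1] / FF [a, Suc b, 1]"
    by (rule eta_NN_FF) simp
  ultimately show ?thesis using FFpos unfolding x_def y_def z_def by (simp add: abs_divide)
qed

lemma L1: fixes m K d S :: real
  assumes m: "m \<ge> 6" and K: "K \<ge> 1" and d: "d \<ge> 1/3" and S: "S \<le> 3/2*K"
  shows "S < ((m+1)*m*K*d - 3)/(m-2)"
proof -
  have q: "(m-6)*(2*m+5) \<ge> 0" using m by (intro mult_nonneg_nonneg) auto
  have q': "2*(m*m) - 7*m - 30 \<ge> 0" using q by (simp add: algebra_simps)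
  have e: "(m*m + m)/3 - 3/2*(m-2) - 8 = (2*(m*m) - 7*m - 30)/6" by (simp add: field_simps)
  have "(2*(m*m) - 7*m - 30)/6 \<ge> 0" using q' by simp
  hence br: "(m*m + m)/3 - 3/2*(m-2) \<ge> 8" using e by linarith
  have "K*((m*m + m)/3 - 3/2*(m-2)) \<ge> K*8" using br K by (intro mult_left_mono) auto
  hence kb: "(m*m + m)*K/3 - 3/2*K*(m-2) \<ge> 8*K" by (simp add: algebra_simps)
  have P: "(m+1)*m*K*d \<ge> (m+1)*m*K*(1/3)" using d m K by (intro mult_left_mono) auto
  have "S*(m-2) \<le> 3/2*K*(m-2)" using S m by (intro mult_right_mono) auto
  also have "\<dots> < (m+1)*m*K*(1/3) - 3"
  proof -
    have eq: "(m+1)*m*K*(1/3) = (m*m+m)*K/3" by (simp add: algebra_simps)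
    show ?thesis using kb K eq by linarith
  qed
  also have "\<dots> \<le> (m+1)*m*K*d - 3" using P by simp
  finally have "S*(m-2) < (m+1)*m*K*d - 3" .
  thus ?thesis using m by (simp add: pos_less_divide_eq)
qed

lemma L2: fixes a X :: real
  assumes a: "a \<ge> 3" and X: "X > 16*(a-1)"
  shows "X/((a-2)*(a+1)) + 4/(a-2) < (X - a - 5)/(a-1)"
proof -
  have X0: "X \<ge> 0" using a X by (simp add: algebra_simps)
  have q: "a*(a-3) \<ge> 0" using a by (intro mult_nonneg_nonneg) auto
  have le: "2*(a-1) \<le> (a-2)*(a+1)" using q by (simp add: algebra_simps)
  have "X/((a-2)*(a+1)) \<le> X/(2*(a-1))" using le X0 a by (intro divide_left_mono) auto
  also have "X/(2*(a-1)) = X/(a-1)/2" by (simp add: divide_divide_eq_left mult.commute)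
  finally have s1: "X/((a-2)*(a+1)) \<le> X/(a-1)/2" .
  have s2: "4/(a-2) \<le> 4" using a by (simp add: divide_le_eq)
  have s3: "(X - a - 5)/(a-1) = X/(a-1) - (a+5)/(a-1)" by (metis diff_diff_eq diff_divide_distrib)
  have s3': "(a+5)/(a-1) \<le> 4" using a by (simp add: divide_le_eq)
  have s4: "X/(a-1) > 16" using X a by (simp add: less_divide_eq)
  have fin: "\<And>p q r u w c1 c2 c3::real. p \<le> u/c1 \<Longrightarrow> q \<le> c2 \<Longrightarrow> r = u - w \<Longrightarrow> w \<le> 4 \<Longrightarrow> c3 < u \<Longrightarrow> c1 > 1 \<Longrightarrow> c3 * (1 - 1/c1) \<ge> c2 + 4 \<Longrightarrow> p + q < r"
  proof -
    fix p q r u w c1 c2 c3 :: real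
    assume h: "p \<le> u/c1" "q \<le> c2" "r = u - w" "w \<le> 4" "c3 < u" "c1 > 1" "c3 * (1 - 1/c1) \<ge> c2 + 4"
    have "u * (1 - 1/c1) > c3 * (1 - 1/c1)" using h(5,6) by (intro mult_strict_right_mono) auto
    hence "u - u/c1 > c2 + 4" using h(7) by (simp add: algebra_simps)
    thus "p + q < r" using h by linarith
  qed
  show ?thesis by (rule fin[OF s1 s2 s3 s3' s4]) simp_all
qed

lemma L3: fixes a X :: real
  assumes a: "a \<ge> 4" and X: "3*X > 10*a + (a+3)*(a+2) + 3" and X0: "X \<ge> 0"
  shows "X/((a-3)*(a+1)) + 10/(a-3) < ((a+3)*X - (a+3)*(a+2) - 3)/a"
proof -
  have le: "1 \<le> (a-3)*(a+1)" using a mult_mono[of 1 "a-3" 1 "a+1"] by simp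
  have s1: "X/((a-3)*(a+1)) \<le> X" using le X0 by (simp add: divide_le_eq mult_le_cancel_left1 mult_left_mono) 
  have s2: "10/(a-3) \<le> 10" using a by (simp add: divide_le_eq)
  have s3: "((a+3)*X - (a+3)*(a+2) - 3)/a = X + (3*X - (a+3)*(a+2) - 3)/a" using a by (simp add: field_simps)
  have s4: "(3*X - (a+3)*(a+2) - 3)/a > 10" using a X by (simp add: less_divide_eq)
  show ?thesis using s1 s2 s3 s4 by linarith
qed

lemma L4: fixes a X :: real
  assumes a: "a \<ge> 3" and X: "X > 15/2*(a-1)"
  shows "X/((a-1)*a) + 2/a < (X - a - 5)/(a-1)"
proof -
  have X0: "X \<ge> 0" using a X by (simp add: algebra_simps)
  have le: "3*(a-1) \<le> (a-1)*a" using mult_right_mono[of 3 a "a-1"] a by (simp add: mult.commute)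
  have "X/((a-1)*a) \<le> X/(3*(a-1))" using le X0 a by (intro divide_left_mono) auto
  also have "X/(3*(a-1)) = X/(a-1)/3" by (simp add: divide_divide_eq_left mult.commute)
  finally have s1: "X/((a-1)*a) \<le> X/(a-1)/3" .
  have s2: "2/a \<le> 1" using a by (simp add: divide_le_eq)
  have s3: "(X - a - 5)/(a-1) = X/(a-1) - (a+5)/(a-1)" by (metis diff_diff_eq diff_divide_distrib)
  have s3': "(a+5)/(a-1) \<le> 4" using a by (simp add: divide_le_eq)
  have s4: "X/(a-1) > 15/2" using X a by (simp add: less_divide_eq)
  have fin: "\<And>p q r u w c1 c2 c3::real. p \<le> u/c1 \<Longrightarrow> q \<le> c2 \<Longrightarrow> r = u - w \<Longrightarrow> w \<le> 4 \<Longrightarrow> c3 < u \<Longrightarrow> c1 > 1 \<Longrightarrow> c3 * (1 - 1/c1) \<ge> c2 + 4 \<Longrightarrow> p + q < r"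
  proof -
    fix p q r u w c1 c2 c3 :: real
    assume h: "p \<le> u/c1" "q \<le> c2" "r = u - w" "w \<le> 4" "c3 < u" "c1 > 1" "c3 * (1 - 1/c1) \<ge> c2 + 4"
    have "u * (1 - 1/c1) > c3 * (1 - 1/c1)" using h(5,6) by (intro mult_strict_right_mono) auto
    hence "u - u/c1 > c2 + 4" using h(7) by (simp add: algebra_simps)
    thus "p + q < r" using h by linarith
  qed
  show ?thesis by (rule fin[OF s1 s2 s3 s3' s4]) simp_all
qed

lemma L5: fixes a X :: real
  assumes a: "a \<ge> 3" and X: "3*X \<ge> 7*a + (a+3)*(a+2) + 3" and X0: "X \<ge> 0"
  shows "X/((a-2)*a) + 6/(a-2) + 1/a < ((a+3)*X - (a+3)*(a+2) - 3)/a"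
proof -
  have le: "3 \<le> (a-2)*a" using a mult_mono[of 1 "a-2" 3 a] by simp
  have s1: "X/((a-2)*a) \<le> X/3" using le X0 by (intro divide_left_mono) auto
  have s2: "6/(a-2) \<le> 6" using a by (simp add: divide_le_eq)
  have s2': "1/a \<le> 1" using a by (simp add: divide_le_eq)
  have s3: "((a+3)*X - (a+3)*(a+2) - 3)/a = X + (3*X - (a+3)*(a+2) - 3)/a" using a by (simp add: field_simps)
  have s4: "(3*X - (a+3)*(a+2) - 3)/a \<ge> 7" using a X by (simp add: le_divide_eq)
  have Xp: "X > 0" using X a by (simp add: algebra_simps) (smt (verit) mult_nonneg_nonneg)
  show ?thesis using s1 s2 s2' s3 s4 Xp by linarith
qed

lemma fact_poly4_nat: "1 \<le> a \<Longrightarrow> (a+2)*(a+1)*a*(a-1) \<le> fact (a+2)"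
proof -
  assume "1 \<le> a"
  then obtain k where k: "a = Suc k" by (cases a) auto
  have f: "fact (a+2) = (a+2)*((a+1)*(a*fact k))" unfolding k by (simp add: algebra_simps)
  have e: "(a+2)*(a+1)*a*(a-1) = (a+2)*((a+1)*(a*k))" unfolding k by (simp add: algebra_simps)
  have "k \<le> fact k" by (rule fact_ge_self)
  hence "a*k \<le> a*fact k" by (rule mult_le_mono2)
  hence "(a+1)*(a*k) \<le> (a+1)*(a*fact k)" by (rule mult_le_mono2)
  hence "(a+2)*((a+1)*(a*k)) \<le> (a+2)*((a+1)*(a*fact k))" by (rule mult_le_mono2)
  thus ?thesis unfolding e f .
qed

lemma fact_poly4: "1 \<le> a \<Longrightarrow> (real a+2)*(real a+1)*real a*(real a-1) \<le> fact (a+2)"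
proof -
  assume a: "1 \<le> a"
  have le: "real ((a+2)*(a+1)*a*(a-1)) \<le> real (fact (a+2))"
    using fact_poly4_nat[OF a] by (simp only: of_nat_le_iff)
  obtain k where k: "a = Suc k" using a by (cases a) auto
  have eq: "real ((a+2)*(a+1)*a*(a-1)) = (real a+2)*(real a+1)*real a*(real a-1)"
    unfolding k by (simp add: algebra_simps)
  show ?thesis using le unfolding eq of_nat_fact .
qed

lemma aux_le: "(F::real) > 0 \<Longrightarrow> (x::real) \<ge> 0 \<Longrightarrow> (x + 1) * (1 / ((x + 2) * F)) \<le> 1 / F"
proof -
  assume F: "F > 0" and x: "x \<ge> 0"
  have "(x + 1) * (1 / ((x + 2) * F)) = ((x+1)/(x+2)) * (1/F)" by simp
  also have "\<dots> \<le> 1 * (1/F)" using F x by (intro mult_right_mono) auto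
  finally show ?thesis by simp
qed

lemma ds_a1: "fact (a+2) * ds a - (real a + 2) \<le> fact (a+2) * ds (a+1)"
proof -
  have "\<bar>t (a+1)\<bar> = 1 / fact (a+1)" by (rule abs_t)
  hence "ds (a+1) \<ge> ds a - 1 / fact (a+1)" using ds_Suc_t[of a] by simp
  hence "fact (a+2) * ds (a+1) \<ge> fact (a+2) * (ds a - 1 / fact (a+1))"
    by (intro mult_left_mono) auto
  also have "fact (a+2) * (ds a - 1 / fact (a+1)) = fact (a+2) * ds a - (real a + 2)"
  proof -
    have "(fact (a+2)::real) = (real a + 2) * fact (a+1)" by (simp add: eval_nat_numeral algebra_simps)
    moreover have "(fact (a+1)::real) > 0" by simp
    ultimately show ?thesis by (simp add: field_simps)
  qed
  finally show ?thesis .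
qed

lemma ds_a2: "(real a + 3) * (fact (a+2) * ds a) - (real a + 3) * (real a + 2) \<le> fact (a+3) * ds (a+2)"
proof -
  have e: "ds (a+2) = ds a + (t (a+1) + t (a+2))" using ds_Suc_t[of a] ds_Suc_t[of "Suc a"] by simp
  have "\<bar>t (a+1) + t (a+2)\<bar> = (real a + 1) * (1 / fact (a+2))" by (rule tt_abs2)
  also have "\<dots> \<le> 1 / fact (a+1)"
  proof -
    have "(fact (a+2)::real) = (real a + 2) * fact (a+1)" by (simp add: eval_nat_numeral algebra_simps)
    note fe = this
    show ?thesis unfolding fe by (rule aux_le) simp_all
  qed
  finally have "ds (a+2) \<ge> ds a - 1 / fact (a+1)" unfolding e by linarith
  hence "fact (a+3) * ds (a+2) \<ge> fact (a+3) * (ds a - 1 / fact (a+1))"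
    by (intro mult_left_mono) auto
  also have "fact (a+3) * (ds a - 1 / fact (a+1)) = (real a + 3) * (fact (a+2) * ds a) - (real a + 3) * (real a + 2)"
  proof -
    have "(fact (a+3)::real) = (real a + 3) * ((real a + 2) * fact (a+1))" by (simp add: eval_nat_numeral algebra_simps)
    moreover have "(fact (a+2)::real) = (real a + 2) * fact (a+1)" by (simp add: eval_nat_numeral algebra_simps)
    moreover have "(fact (a+1)::real) > 0" by simp
    ultimately show ?thesis by (simp add: field_simps)
  qed
  finally show ?thesis .
qed

lemma ds_half: "1 \<le> m \<Longrightarrow> ds m \<le> 1/2"
  using ds_upper[of m] by (cases "m = 1") auto


lemma frac_bound: "0 \<le> A \<Longrightarrow> 0 \<le> d \<Longrightarrow> d \<le> B \<Longrightarrow> 1 \<le> x \<Longrightarrow> 1 \<le> y \<Longrightarrow> d * A / (x * y) \<le> B * (A::real)"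
proof -
  assume h: "0 \<le> A" "0 \<le> d" "d \<le> B" "1 \<le> x" "1 \<le> y"
  have "1 \<le> x * y" using h mult_mono[of 1 x 1 y] by simp
  hence "d * A / (x * y) \<le> d * A" using h by (intro div_le_self) auto
  also have "\<dots> \<le> B * A" using h by (intro mult_right_mono) auto
  finally show ?thesis .
qed

lemma fact_m1: "1 \<le> m \<Longrightarrow> (fact (m+1) :: real) = (real m + 1) * real m * fact (m-1)"
proof -
  assume "1 \<le> m"
  then obtain k where k: "m = Suc k" by (cases m) auto
  show ?thesis unfolding k by (simp add: algebra_simps)
qed

lemma gen_final:
  assumes m: "6 \<le> m" and S: "S \<le> 3/2 * fact (m-1)"
  shows "S < - eta [m, 3] (m+3)"
proof -
  have "S < ((real m+1)*real m*fact (m-1)*ds m - 3)/(real m-2)"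
    by (rule L1) (use m S ds_lower[of m] in auto)
  also have "\<dots> = (fact (m+1) * ds m - 3)/(real m-2)" using fact_m1[of m] m by simp
  also have "\<dots> \<le> - eta [m, 3] (m+3)" by (rule T_low) (use m in simp)
  finally show ?thesis .
qed

lemma partA:
  assumes ab: "b + 1 \<le> a" and b2: "2 \<le> b"
  shows "\<bar>eta [a, Suc b, 1] (a+b+2)\<bar> < - eta [a+b-1, 3] (a+b+2)"
proof -
  let ?X = "ds a * fact (a+2)"
  have U: "\<bar>eta [a, Suc b, 1] (a+b+2)\<bar> \<le>
     ds a * fact (a+2) / ((real a - real b) * (real a + 1))
   + ds b * fact (b+2) / ((real a - real b) * (real b + 1))" by (rule U_a[OF ab])
  have a3: "3 \<le> a" using ab b2 by simp
  have X: "?X \<ge> fact (a+2) / 3" using ds_lower[of a] a3 by simp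
  have F: "(real a+2)*(real a+1)*real a*(real a-1) \<le> fact (a+2)" using fact_poly4[of a] a3 by simp
  consider "b = 2" | "b = 3" | "4 \<le> b" using b2 by linarith
  then show ?thesis
  proof cases
    case 1
    have e: "ds b * fact (b+2) / ((real a - real b) * (real b + 1)) = 4 / (real a - 2)"
    proof -
      have d: "ds 2 = 1/2" by (simp add: ds_def eval_nat_numeral)
      have f: "fact (2+2) = (24::real)" by (simp add: eval_nat_numeral)
      have p: "real a - 2 > 0" using a3 by simp
      show ?thesis unfolding 1 d f using p by (simp add: field_simps)
    qed
    have "(real a + 2) * (real a + 1) * real a \<ge> 5 * 4 * 3" using a3
      by (intro mult_mono) auto
    hence "(real a+2)*(real a+1)*real a*(real a-1) \<ge> 60 * (real a - 1)" using a3
      by (intro mult_right_mono) auto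
    moreover have "real a \<ge> 3" using a3 by simp
    moreover have "\<And>P F Y x::real. 60*(x-1) \<le> P \<Longrightarrow> 3 \<le> x \<Longrightarrow> F/3 \<le> Y \<Longrightarrow> P \<le> F \<Longrightarrow> 16*(x-1) < Y"
      by (simp add: algebra_simps)
    ultimately have X16: "?X > 16 * (real a - 1)" using X F by blast
    have "\<bar>eta [a, Suc b, 1] (a+b+2)\<bar> \<le> ?X / ((real a - 2) * (real a + 1)) + 4 / (real a - 2)"
      using U e 1 by simp
    also have "\<dots> < (?X - real a - 5) / (real a - 1)" by (rule L2) (use a3 X16 in auto)
    also have "\<dots> \<le> (fact (a+2) * ds (a+1) - 3) / (real a - 1)"
      using ds_a1[of a] a3 by (intro divide_right_mono) (auto simp: mult.commute)
    also have "\<dots> = (fact ((a+1)+1) * ds (a+1) - 3) / (real (a+1) - 2)" by simp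
    also have "\<dots> \<le> - eta [a+1, 3] ((a+1)+3)" by (rule T_low) (use a3 in simp)
    finally show ?thesis using 1 by (simp add: eval_nat_numeral)
  next
    case 2
    have a4: "4 \<le> a" using ab 2 by simp
    have e: "ds b * fact (b+2) / ((real a - real b) * (real b + 1)) = 10 / (real a - 3)"
    proof -
      have d: "ds 3 = 1/3" by (simp add: ds_def eval_nat_numeral)
      have f: "fact (3+2) = (120::real)" by (simp add: eval_nat_numeral)
      have p: "real a - 3 > 0" using a4 by simp
      show ?thesis unfolding 2 d f using p by (simp add: field_simps)
    qed
    have "real a * (real a - 1) \<ge> 4 * 3" using a4 by (intro mult_mono) auto
    hence "(real a+2)*(real a+1)*(real a*(real a-1)) \<ge> (real a+2)*(real a+1)*12" using a4
      by (intro mult_left_mono) auto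
    hence "fact (a+2) \<ge> 12 * ((real a+2)*(real a+1))" using F by (simp add: algebra_simps)
    moreover have "12 * ((real a+2)*(real a+1)) > 10 * real a + (real a + 3) * (real a + 2) + 3"
      by (simp add: algebra_simps) (use a4 in \<open>smt (verit) mult_nonneg_nonneg of_nat_0_le_iff\<close>)
    ultimately have X3: "3 * ?X > 10 * real a + (real a + 3) * (real a + 2) + 3" using X by linarith
    have X0: "?X \<ge> 0" using X by (smt (verit) divide_nonneg_pos fact_ge_zero)
    have "\<bar>eta [a, Suc b, 1] (a+b+2)\<bar> \<le> ?X / ((real a - 3) * (real a + 1)) + 10 / (real a - 3)"
      using U e 2 by simp
    also have "\<dots> < ((real a + 3) * ?X - (real a + 3) * (real a + 2) - 3) / real a"
      by (rule L3) (use a4 X3 X0 in auto)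
    also have "\<dots> \<le> (fact (a+3) * ds (a+2) - 3) / real a"
      using ds_a2[of a] a4 by (intro divide_right_mono) (auto simp: mult.commute)
    also have "\<dots> = (fact ((a+2)+1) * ds (a+2) - 3) / (real (a+2) - 2)" by (simp add: eval_nat_numeral)
    also have "\<dots> \<le> - eta [a+2, 3] ((a+2)+3)" by (rule T_low) (use a4 in simp)
    finally show ?thesis using 2 by (simp add: eval_nat_numeral)
  next
    case 3
    let ?m = "a+b-1"
    have m6: "6 \<le> ?m" using 3 ab by simp
    have u1: "ds a * fact (a+2) / ((real a - real b) * (real a + 1)) \<le> 1/2 * fact (a+2)"
      by (rule frac_bound) (use ab ds_nonneg[of a] ds_half[of a] a3 in auto)
    have u2: "ds b * fact (b+2) / ((real a - real b) * (real b + 1)) \<le> 1/2 * fact (b+2)"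
      by (rule frac_bound) (use ab ds_nonneg[of b] ds_half[of b] b2 in auto)
    have f1: "fact (a+2) \<le> (fact (?m - 1) :: real)" by (rule fact_mono) (use 3 in simp)
    have f2: "fact (b+2) \<le> (fact (?m - 1) :: real)" by (rule fact_mono) (use 3 ab in simp)
    have "\<bar>eta [a, Suc b, 1] (a+b+2)\<bar> \<le> 3/2 * fact (?m - 1)"
      using U u1 u2 f1 f2 fact_ge_zero[of "?m - 1"] by linarith
    hence "\<bar>eta [a, Suc b, 1] (a+b+2)\<bar> < - eta [?m, 3] (?m+3)" by (rule gen_final[OF m6, rotated])
    moreover have "?m + 3 = a+b+2" using ab by simp
    ultimately show ?thesis by simp
  qed
qed

lemma partB:
  assumes ab: "b + 1 \<le> a" and bc: "c + 1 \<le> b"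
  shows "\<bar>eta [a, Suc b, Suc (Suc c)] (a+b+c+3)\<bar> < - eta [a+b+c, 3] (a+b+c+3)"
proof -
  let ?X = "ds a * fact (a+2)"
  have U: "\<bar>eta [a, Suc b, Suc (Suc c)] (a+b+c+3)\<bar> \<le>
     ds a * fact (a+2) / ((real a - real b) * (real a - real c))
   + ds b * fact (b+2) / ((real a - real b) * (real b - real c))
   + ds c * fact (c+2) / ((real a - real c) * (real b - real c))" by (rule U_b[OF ab bc])
  have a2: "2 \<le> a" using ab bc by simp
  have X: "?X \<ge> fact (a+2) / 3" using ds_lower[of a] a2 by simp
  have F: "(real a+2)*(real a+1)*real a*(real a-1) \<le> fact (a+2)" using fact_poly4[of a] a2 by simp
  consider "b = 1" | "b = 2" "c = 0" | "3 \<le> b + c" using bc by linarith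
  then show ?thesis
  proof cases
    case 1
    hence c0: "c = 0" using bc by simp
    have e: "\<bar>eta [a, Suc b, Suc (Suc c)] (a+b+c+3)\<bar> \<le> ?X / ((real a - 1) * real a) + 2 / real a"
    proof -
      have "ds b * fact (b+2) / ((real a - real b) * (real b - real c)) = 0" unfolding 1 by simp
      moreover have "ds c * fact (c+2) / ((real a - real c) * (real b - real c)) = 2 / real a"
        unfolding 1 c0 by (simp add: eval_nat_numeral)
      ultimately show ?thesis using U 1 c0 by simp
    qed
    show ?thesis
    proof (cases "a = 2")
      case True
      have d2: "ds 2 = 1/2" and d3: "ds 3 = 1/3" and d4: "ds 4 = 3/8" by (simp_all add: ds_def eval_nat_numeral)
      have f4: "fact 4 = (24::real)" by (simp add: eval_nat_numeral)
      have "?X / ((real a - 1) * real a) + 2 / real a = 7" unfolding True d2 by (simp add: eval_nat_numeral)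
      moreover have "- eta [3, 3] (3+3) = 11"
      proof -
        have "- eta [3, 3] (3+3) = (3 * ds (3+1) - 2 * ds 3) * fact (3+1) / (real 3 - 2)" by (rule T_exact) simp
        also have "\<dots> = (3 * ds 4 - 2 * ds 3) * fact 4 / (real 3 - 2)" by simp
        also have "\<dots> = 11" unfolding d3 d4 f4 by simp
        finally show ?thesis .
      qed
      ultimately show ?thesis using e True 1 c0 by (simp add: eval_nat_numeral)
    next
      case False
      hence a3: "3 \<le> a" using a2 by simp
      have ra: "real a \<ge> 3" using a3 by simp
      have "(real a + 2) * (real a + 1) * real a \<ge> 5 * 4 * 3" using a3
        by (intro mult_mono) auto
      hence "(real a+2)*(real a+1)*real a*(real a-1) \<ge> 60 * (real a - 1)" using a3
        by (intro mult_right_mono) auto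
      moreover have "\<And>P F Y x::real. 60*(x-1) \<le> P \<Longrightarrow> 3 \<le> x \<Longrightarrow> F/3 \<le> Y \<Longrightarrow> P \<le> F \<Longrightarrow> 15/2*(x-1) < Y"
        by (simp add: algebra_simps)
      ultimately have X15: "?X > 15/2 * (real a - 1)" using X F ra by blast
      have "\<bar>eta [a, Suc b, Suc (Suc c)] (a+b+c+3)\<bar> \<le> ?X / ((real a - 1) * real a) + 2 / real a" by (rule e)
      also have "\<dots> < (?X - real a - 5) / (real a - 1)" by (rule L4) (use ra X15 in auto)
      also have "\<dots> \<le> (fact (a+2) * ds (a+1) - 3) / (real a - 1)"
        using ds_a1[of a] a3 by (intro divide_right_mono) (auto simp: mult.commute)
      also have "\<dots> = (fact ((a+1)+1) * ds (a+1) - 3) / (real (a+1) - 2)" by simp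
      also have "\<dots> \<le> - eta [a+1, 3] ((a+1)+3)" by (rule T_low) (use a3 in simp)
      finally show ?thesis using 1 c0 by (simp add: eval_nat_numeral)
    qed
  next
    case 2
    have a3: "3 \<le> a" using ab 2 by simp
    have ra: "real a \<ge> 3" using a3 by simp
    have e: "\<bar>eta [a, Suc b, Suc (Suc c)] (a+b+c+3)\<bar> \<le> ?X / ((real a - 2) * real a) + 6 / (real a - 2) + 1 / real a"
    proof -
      have p: "real a - 2 > 0" "real a > 0" using a3 by simp_all
      have d2: "ds 2 = 1/2" by (simp add: ds_def eval_nat_numeral)
      have "ds b * fact (b+2) / ((real a - real b) * (real b - real c)) = 6 / (real a - 2)"
        unfolding 2 d2 using p by (simp add: eval_nat_numeral field_simps)
      moreover have "ds c * fact (c+2) / ((real a - real c) * (real b - real c)) = 1 / real a"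
        unfolding 2 using p by (simp add: eval_nat_numeral field_simps)
      ultimately show ?thesis using U 2 by simp
    qed
    have "real a * (real a - 1) \<ge> 3 * 2" using ra by (intro mult_mono) auto
    hence "(real a+2)*(real a+1)*(real a*(real a-1)) \<ge> (real a+2)*(real a+1)*6" using ra
      by (intro mult_left_mono) auto
    hence "fact (a+2) \<ge> 6 * ((real a+2)*(real a+1))" using F by (simp add: algebra_simps)
    moreover have "6 * ((real a+2)*(real a+1)) \<ge> 7 * real a + (real a + 3) * (real a + 2) + 3"
      by (simp add: algebra_simps)
    ultimately have X3: "3 * ?X \<ge> 7 * real a + (real a + 3) * (real a + 2) + 3" using X by linarith
    have X0: "?X \<ge> 0" using X by (smt (verit) divide_nonneg_pos fact_ge_zero)
    note e
    also have "?X / ((real a - 2) * real a) + 6 / (real a - 2) + 1 / real a < ((real a + 3) * ?X - (real a + 3) * (real a + 2) - 3) / real a"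
      by (rule L5) (use ra X3 X0 in auto)
    also have "\<dots> \<le> (fact (a+3) * ds (a+2) - 3) / real a"
      using ds_a2[of a] a3 by (intro divide_right_mono) (auto simp: mult.commute)
    also have "\<dots> = (fact ((a+2)+1) * ds (a+2) - 3) / (real (a+2) - 2)" by (simp add: eval_nat_numeral)
    also have "\<dots> \<le> - eta [a+2, 3] ((a+2)+3)" by (rule T_low) (use a3 in simp)
    finally show ?thesis using 2 by (simp add: eval_nat_numeral)
  next
    case 3
    let ?m = "a+b+c"
    have b2: "2 \<le> b" using 3 bc by simp
    have m6: "6 \<le> ?m" using 3 ab b2 by simp
    have u1: "ds a * fact (a+2) / ((real a - real b) * (real a - real c)) \<le> 1/2 * fact (a+2)"
      by (rule frac_bound) (use ab bc ds_nonneg[of a] ds_half[of a] a2 in auto)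
    have u2: "ds b * fact (b+2) / ((real a - real b) * (real b - real c)) \<le> 1/2 * fact (b+2)"
      by (rule frac_bound) (use ab bc ds_nonneg[of b] ds_half[of b] b2 in auto)
    have u3: "ds c * fact (c+2) / ((real a - real c) * (real b - real c)) \<le> 1 * fact (c+2)"
      by (rule frac_bound) (use ab bc ds_nonneg[of c] ds_le1[of c] in auto)
    have f1: "fact (a+2) \<le> (fact (?m - 1) :: real)" by (rule fact_mono) (use 3 in simp)
    have f2: "fact (b+2) \<le> (fact (?m - 1) :: real)" by (rule fact_mono) (use 3 ab b2 in simp)
    have f3: "fact (c+2) \<le> (fact (?m - 2) :: real)" by (rule fact_mono) (use 3 ab b2 in simp)
    have f4: "2 * fact (?m - 2) \<le> (fact (?m - 1) :: real)"
    proof -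
      have "?m - 1 = Suc (?m - 2)" using m6 by simp
      hence "(fact (?m - 1) :: real) = real (Suc (?m - 2)) * fact (?m - 2)" by (simp only: fact_Suc)
      moreover have "real (Suc (?m - 2)) \<ge> 2" using m6 by simp
      ultimately show ?thesis by (simp add: mult_right_mono)
    qed
    have "\<bar>eta [a, Suc b, Suc (Suc c)] (a+b+c+3)\<bar> \<le> 3/2 * fact (?m - 1)"
      using U u1 u2 u3 f1 f2 f3 f4 by linarith
    thus ?thesis by (rule gen_final[OF m6, rotated])
  qed
qed

theorem lemma3p6:
  shows "(\<forall>n i::nat. n \<ge> 7 \<and> 3 \<le> i \<and> real i \<le> (real n - 1) / 2 \<longrightarrow>
            \<bar>eta [n - i - 1, i, 1] n\<bar> < - eta [n - 3, 3] n)
       \<and> (\<forall>n i j::nat. n \<ge> 6 \<and> 2 \<le> j \<and> j \<le> i \<and> real i \<le> (real n - 2) / 2 \<and> n - i - j \<ge> i \<longrightarrow>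
            \<bar>eta [n - i - j, i, j] n\<bar> < - eta [n - 3, 3] n)"
proof (intro conjI allI impI)
  fix n i :: nat
  assume h: "n \<ge> 7 \<and> 3 \<le> i \<and> real i \<le> (real n - 1) / 2"
  have "real (2*i+1) \<le> real n" using h by simp
  hence i2: "2*i+1 \<le> n" by (simp only: of_nat_le_iff)
  define a where "a = n - i - 1"
  define b where "b = i - 1"
  have ib: "i = Suc b" using h by (simp add: b_def)
  have na: "n = a+b+2" using i2 h unfolding a_def b_def by linarith
  have ab: "b + 1 \<le> a" using i2 h by (simp add: a_def b_def)
  have b2: "2 \<le> b" using h unfolding b_def by linarith
  have l1: "[n - i - 1, i, 1] = [a, Suc b, 1]" by (simp add: a_def ib)
  have l2: "n - 3 = a+b-1" using na by simp
  show "\<bar>eta [n - i - 1, i, 1] n\<bar> < - eta [n - 3, 3] n"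
    unfolding l1 l2 using partA[OF ab b2] na by simp
next
  fix n i j :: nat
  assume h: "n \<ge> 6 \<and> 2 \<le> j \<and> j \<le> i \<and> real i \<le> (real n - 2) / 2 \<and> n - i - j \<ge> i"
  define a where "a = n - i - j"
  define b where "b = i - 1"
  define c where "c = j - 2"
  have ib: "i = Suc b" using h unfolding b_def by linarith
  have jc: "j = Suc (Suc c)" using h unfolding c_def by linarith
  have ij: "i + j \<le> n" using h by linarith
  have na: "n = a+b+c+3" using ij h unfolding a_def b_def c_def by linarith
  have ab: "b + 1 \<le> a" using h ij unfolding a_def b_def by linarith
  have bc: "c + 1 \<le> b" using h unfolding b_def c_def by linarith
  have l1: "[n - i - j, i, j] = [a, Suc b, Suc (Suc c)]" by (simp add: a_def ib jc)
  have l2: "n - 3 = a+b+c" using na by simp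
  show "\<bar>eta [n - i - j, i, j] n\<bar> < - eta [n - 3, 3] n"
    unfolding l1 l2 using partB[OF ab bc] na by simp
qed


end
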